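(* Let $l\ge1$ and work in $\mathfrak{OA}_{1,2l}=\mathfrak{OA}/\mathfrak I_{(t-1)^{2l}}$, writing $X_k,Y_k$ for the images. The operator $\mathrm{ad}\,X_0$ on $\mathfrak{OA}_{1,2l}$ is diagonalizable with eigenvalues $0,4,-4$, each eigenspace being $l$-dimensional, with bases: eigenvalue $0$: $X_0$ and $\sum_{k=2j-2}^{2l-1}(-1)^k\binom{k-1}{2j-4}X_k$ for $2\le j\le l$; eigenvalue $\pm4$: $2Y_{2j-1}\pm\Big(X_{2j-1}-\sum_{k=2j-1}^{2l-1}(-1)^k\binom{k-1}{2j-2}X_k\Big)$ for $1\le j\le l$. Moreover the $0$-eigenvectors commute with each other.
   Context: Work over $\mathbb C$. $\mathfrak{sl}_2$ has basis $e,f,h$ with $[e,f]=h$, $[h,e]=2e$, $[h,f]=-2f$. The Onsager algebra is the Lie subalgebra $\mathfrak{OA}=\{p(t)e+p(t^{-1})f+q(t)h:\ p,q\in\mathbb C[t,t^{-1}],\ q(t^{-1})=-q(t)\}$ of the loop algebra $\mathbb C[t,t^{-1}]\otimes\mathfrak{sl}_2$ (bracket $[px,qy]=pq[x,y]$). $\mathfrak I_{(t-1)^L}=\{p(t)e+p(t^{-1})f+q(t)h\in\mathfrak{OA}: p,q\in(t-1)^L\mathbb C[t,t^{-1}]\}$. For $k\ge0$, $X_k=2(t-1)^ke+2(t^{-1}-1)^kf$ and $Y_k=(-1)^k\big((t-1)^k-(t^{-1}-1)^k\big)h$, elements of $\mathfrak{OA}$. $\binom xa=x(x-1)\cdots(x-a+1)/a!$,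 $\binom x0=1$. *)

theory Defs
  imports Complex_Main "HOL-Computational_Algebra.Polynomial"
    "HOL-Library.Function_Algebras" "HOL-Library.Product_Plus"
begin

text \<open>Laurent polynomials in t are represented by the functions they induce on the
nonzero complex numbers (value 0 forced at z = 0), which is an injective
representation of C[t,t^-1].  An element p e + q f + r h of the loop algebra
C[t,t^-1] (x) sl2 is the triple (p, q, r).\<close>

type_synonym lp = "complex \<Rightarrow> complex"
type_synonym oa_elt = "lp \<times> lp \<times> lp"

definition mask :: "lp \<Rightarrow> lp" where
  "mask g = (\<lambda>z. if z = 0 then 0 else g z)"

definition laurent :: "lp \<Rightarrow> bool" where
  "laurent p \<longleftrightarrow> (\<exists>P::complex poly. \<exists>n::nat. p = mask (\<lambda>z. poly P z / z ^ n))"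

definition inv_arg :: "lp \<Rightarrow> lp" where
  "inv_arg p = (\<lambda>z. p (inverse z))"

text \<open>Loop algebra bracket: [e,f]=h, [h,e]=2e, [h,f]=-2f, coefficients multiply.\<close>
definition loop_bracket :: "oa_elt \<Rightarrow> oa_elt \<Rightarrow> oa_elt" where
  "loop_bracket x y = (case x of (a1, b1, c1) \<Rightarrow> case y of (a2, b2, c2) \<Rightarrow>
     (2 * (c1 * a2 - a1 * c2), 2 * (b1 * c2 - c1 * b2), a1 * b2 - b1 * a2))"

definition elt_scale :: "complex \<Rightarrow> oa_elt \<Rightarrow> oa_elt" where
  "elt_scale c x = (case x of (a, b, d) \<Rightarrow> ((\<lambda>z. c * a z), (\<lambda>z. c * b z), (\<lambda>z. c * d z)))"

definition Onsager :: "oa_elt set" where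
  "Onsager = {(p, q, r). laurent p \<and> q = inv_arg p \<and> laurent r \<and> inv_arg r = - r}"

definition onsager_ideal :: "nat \<Rightarrow> oa_elt set" where
  "onsager_ideal L = {(p, q, r). (p, q, r) \<in> Onsager \<and>
     (\<exists>u v. laurent u \<and> laurent v \<and> p = (\<lambda>z. (z - 1) ^ L * u z) \<and> r = (\<lambda>z. (z - 1) ^ L * v z))}"

definition Xel :: "nat \<Rightarrow> oa_elt" where
  "Xel k = (mask (\<lambda>z. 2 * (z - 1) ^ k), mask (\<lambda>z. 2 * (inverse z - 1) ^ k), 0)"

definition Yel :: "nat \<Rightarrow> oa_elt" where
  "Yel k = (0, 0, mask (\<lambda>z. (-1) ^ k * ((z - 1) ^ k - (inverse z - 1) ^ k)))"

definition zero_vec :: "nat \<Rightarrow> nat \<Rightarrow> oa_elt" where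
  "zero_vec l j = (if j = 1 then Xel 0 else
     (\<Sum>k\<in>{2*j-2..2*l-1}. elt_scale ((-1) ^ k * of_nat ((k - 1) choose (2*j-4))) (Xel k)))"

definition pm_vec :: "nat \<Rightarrow> complex \<Rightarrow> nat \<Rightarrow> oa_elt" where
  "pm_vec l s j = elt_scale 2 (Yel (2*j-1)) + elt_scale s (Xel (2*j-1) -
     (\<Sum>k\<in>{2*j-1..2*l-1}. elt_scale ((-1) ^ k * of_nat ((k - 1) choose (2*j-2))) (Xel k)))"

end

theory Submission
  imports Defs
begin


lemma fun_sum_apply: "(sum f A) (x::'a) = sum (\<lambda>a. f a x) A"
  by (induction A rule: infinite_finite_induct) auto

lemma laurentI:
  assumes "p 0 = 0" "\<And>z. z \<noteq> 0 \<Longrightarrow> p z = poly P z / z ^ n"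
  shows "laurent p"
  unfolding laurent_def
  by (rule exI[of _ P], rule exI[of _ n]) (auto simp: mask_def assms)

lemma laurent_ex:
  assumes "laurent p"
  shows "\<exists>P n. p 0 = 0 \<and> (\<forall>z. z \<noteq> 0 \<longrightarrow> p z = poly P z / z ^ n)"
proof -
  obtain P n where p: "p = mask (\<lambda>z. poly P z / z ^ n)" using assms unfolding laurent_def by auto
  show ?thesis by (rule exI[of _ P], rule exI[of _ n]) (simp add: p mask_def)
qed

lemma laurentE:
  assumes "laurent p"
  obtains P n where "p 0 = 0" "\<And>z. z \<noteq> 0 \<Longrightarrow> p z = poly P z / z ^ n"
  using laurent_ex[OF assms] by blast

lemma laurent_at0: "laurent p \<Longrightarrow> p 0 = 0"
  by (erule laurentE) auto

lemma laurent_add: "laurent p \<Longrightarrow> laurent q \<Longrightarrow> laurent (\<lambda>z. p z + q z)"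
proof -
  assume a: "laurent p" "laurent q"
  obtain P n where P: "p 0 = 0" "\<And>z. z \<noteq> 0 \<Longrightarrow> p z = poly P z / z ^ n" using laurentE[OF a(1)] by metis
  obtain Q m where Q: "q 0 = 0" "\<And>z. z \<noteq> 0 \<Longrightarrow> q z = poly Q z / z ^ m" using laurentE[OF a(2)] by metis
  show ?thesis
    by (rule laurentI[where P="P * monom 1 m + Q * monom 1 n" and n="n+m"])
       (auto simp: P Q poly_monom field_simps power_add)
qed

lemma laurent_mult: "laurent p \<Longrightarrow> laurent q \<Longrightarrow> laurent (\<lambda>z. p z * q z)"
proof -
  assume a: "laurent p" "laurent q"
  obtain P n where P: "p 0 = 0" "\<And>z. z \<noteq> 0 \<Longrightarrow> p z = poly P z / z ^ n" using laurentE[OF a(1)] by metis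
  obtain Q m where Q: "q 0 = 0" "\<And>z. z \<noteq> 0 \<Longrightarrow> q z = poly Q z / z ^ m" using laurentE[OF a(2)] by metis
  show ?thesis
    by (rule laurentI[where P="P * Q" and n="n+m"])
       (auto simp: P Q field_simps power_add)
qed

lemma laurent_polymult: "laurent q \<Longrightarrow> laurent (\<lambda>z. poly P z * q z)"
proof -
  assume a: "laurent q"
  obtain Q m where Q: "q 0 = 0" "\<And>z. z \<noteq> 0 \<Longrightarrow> q z = poly Q z / z ^ m" using laurentE[OF a] by metis
  show ?thesis
    by (rule laurentI[where P="P * Q" and n="m"])
       (auto simp: Q field_simps)
qed

lemma laurent_scale: "laurent q \<Longrightarrow> laurent (\<lambda>z. c * q z)"
  using laurent_polymult[of q "[:c:]"] by simp

lemma laurent_uminus: "laurent q \<Longrightarrow> laurent (\<lambda>z. - q z)"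
  using laurent_scale[of q "-1"] by simp

lemma laurent_diff: "laurent p \<Longrightarrow> laurent q \<Longrightarrow> laurent (\<lambda>z. p z - q z)"
  using laurent_add[of p "\<lambda>z. - q z"] laurent_uminus[of q] by simp

lemma laurent_zero: "laurent (\<lambda>z. 0)"
  by (rule laurentI[where P=0 and n=0]) auto

lemma laurent_zero': "laurent 0"
  using laurent_zero by (simp add: zero_fun_def)

lemma laurent_sum: "(\<And>a. a \<in> A \<Longrightarrow> laurent (f a)) \<Longrightarrow> laurent (\<lambda>z. \<Sum>a\<in>A. f a z)"
proof (induction A rule: infinite_finite_induct)
  case (infinite A) then show ?case by (simp add: laurent_zero)
next
  case empty then show ?case by (simp add: laurent_zero)
next
  case (insert x F) then show ?case by (simp add: laurent_add)
qed

lemma laurent_inv: "laurent p \<Longrightarrow> laurent (\<lambda>z. p (inverse z))"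
proof -
  assume a: "laurent p"
  obtain P n where P: "p 0 = 0" "\<And>z. z \<noteq> 0 \<Longrightarrow> p z = poly P z / z ^ n" using laurentE[OF a] by metis
  show ?thesis
  proof (rule laurentI[where P="reflect_poly P * monom 1 n" and n="degree P"])
    fix z :: complex assume z: "z \<noteq> 0"
    show "p (inverse z) = poly (reflect_poly P * monom 1 n) z / z ^ degree P"
      using z by (simp add: P poly_reflect_poly_nz poly_monom field_simps power_inverse)
  qed (simp add: P)
qed

lemma laurent_inv_arg: "laurent p \<Longrightarrow> laurent (inv_arg p)"
  unfolding inv_arg_def by (rule laurent_inv)

lemma laurent_mask_poly: "laurent (mask (\<lambda>z. poly P z))"
  by (rule laurentI[where P=P and n=0]) (auto simp: mask_def)

lemma laurent_mask_invpow: "laurent (mask (\<lambda>z. inverse z ^ k))"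
  by (rule laurentI[where P=1 and n=k]) (auto simp: mask_def field_simps power_inverse)

definition one_l :: lp where "one_l = mask (\<lambda>z. 1)"
definition Uk :: "nat \<Rightarrow> lp" where "Uk k = mask (\<lambda>z. (z - 1) ^ k)"
definition Vk :: "nat \<Rightarrow> lp" where "Vk k = mask (\<lambda>z. (inverse z - 1) ^ k)"
definition MI :: "nat \<Rightarrow> lp \<Rightarrow> bool" where
  "MI N f \<longleftrightarrow> (\<exists>u. laurent u \<and> f = (\<lambda>z. (z - 1) ^ N * u z))"

lemma laurent_one: "laurent one_l"
  unfolding one_l_def using laurent_mask_poly[of 1] by simp

lemma laurent_Uk: "laurent (Uk k)"
  unfolding Uk_def using laurent_mask_poly[of "[:-1,1:]^k"] by simp

lemma inv_arg_Uk: "inv_arg (Uk k) = Vk k"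
  by (auto simp: inv_arg_def Uk_def Vk_def mask_def)

lemma inv_arg_Vk: "inv_arg (Vk k) = Uk k"
  by (auto simp: inv_arg_def Uk_def Vk_def mask_def)

lemma laurent_Vk: "laurent (Vk k)"
  using laurent_inv_arg[OF laurent_Uk[of k]] by (simp add: inv_arg_Uk)

lemma inv_arg_inv_arg[simp]: "inv_arg (inv_arg p) = p"
  by (simp add: inv_arg_def)

lemma Uk_eq: "Uk k = (\<lambda>z. (z - 1) ^ k * one_l z)"
  by (auto simp: Uk_def one_l_def mask_def)

lemma laurent_zpow: "laurent u \<Longrightarrow> laurent (\<lambda>z. (z - 1) ^ N * u z)"
  using laurent_polymult[of u "[:-1,1:]^N"] by simp

lemma MI_laurent: "MI N f \<Longrightarrow> laurent f"
  unfolding MI_def using laurent_zpow by auto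

lemma MI_0: "laurent f \<Longrightarrow> MI 0 f"
  unfolding MI_def by auto

lemma MI_zpow: "laurent u \<Longrightarrow> MI N (\<lambda>z. (z - 1) ^ N * u z)"
  unfolding MI_def by auto

lemma MI_add: "MI N f \<Longrightarrow> MI N g \<Longrightarrow> MI N (\<lambda>z. f z + g z)"
proof -
  assume "MI N f" "MI N g"
  then obtain u v where "laurent u" "f = (\<lambda>z. (z - 1) ^ N * u z)" "laurent v" "g = (\<lambda>z. (z - 1) ^ N * v z)"
    unfolding MI_def by auto
  then show ?thesis unfolding MI_def
    by (intro exI[where x="\<lambda>z. u z + v z"]) (auto intro: laurent_add simp: algebra_simps)
qed

lemma MI_scale: "MI N f \<Longrightarrow> MI N (\<lambda>z. c * f z)"
proof -
  assume "MI N f"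
  then obtain u where "laurent u" "f = (\<lambda>z. (z - 1) ^ N * u z)"
    unfolding MI_def by auto
  then show ?thesis unfolding MI_def
    by (intro exI[where x="\<lambda>z. c * u z"]) (auto intro: laurent_scale simp: algebra_simps)
qed

lemma MI_uminus: "MI N f \<Longrightarrow> MI N (\<lambda>z. - f z)"
  using MI_scale[of N f "-1"] by simp

lemma MI_diff: "MI N f \<Longrightarrow> MI N g \<Longrightarrow> MI N (\<lambda>z. f z - g z)"
  using MI_add[of N f "\<lambda>z. - g z"] MI_uminus[of N g] by simp

lemma MI_zero: "MI N (\<lambda>z. 0)"
  using MI_zpow[OF laurent_zero, of N] by simp

lemma MI_sum: "(\<And>a. a \<in> A \<Longrightarrow> MI N (f a)) \<Longrightarrow> MI N (\<lambda>z. \<Sum>a\<in>A. f a z)"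
proof (induction A rule: infinite_finite_induct)
  case (infinite A) then show ?case by (simp add: MI_zero)
next
  case empty then show ?case by (simp add: MI_zero)
next
  case (insert x F) then show ?case by (simp add: MI_add)
qed

lemma MI_multl: "MI N f \<Longrightarrow> laurent g \<Longrightarrow> MI N (\<lambda>z. g z * f z)"
proof -
  assume "MI N f" "laurent g"
  then obtain u where "laurent u" "f = (\<lambda>z. (z - 1) ^ N * u z)"
    unfolding MI_def by auto
  then show ?thesis unfolding MI_def using \<open>laurent g\<close>
    by (intro exI[where x="\<lambda>z. g z * u z"]) (auto intro: laurent_mult simp: algebra_simps)
qed

lemma MI_multr: "MI N f \<Longrightarrow> laurent g \<Longrightarrow> MI N (\<lambda>z. f z * g z)"
  using MI_multl[of N f g] by (simp add: mult.commute)

lemma MI_mult: "MI a f \<Longrightarrow> MI b g \<Longrightarrow> MI (a + b) (\<lambda>z. f z * g z)"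
proof -
  assume "MI a f" "MI b g"
  then obtain u v where "laurent u" "f = (\<lambda>z. (z - 1) ^ a * u z)" "laurent v" "g = (\<lambda>z. (z - 1) ^ b * v z)"
    unfolding MI_def by auto
  then show ?thesis unfolding MI_def
    by (intro exI[where x="\<lambda>z. u z * v z"]) (auto intro: laurent_mult simp: algebra_simps power_add)
qed

lemma MI_mono: "MI N f \<Longrightarrow> M \<le> N \<Longrightarrow> MI M f"
proof -
  assume "MI N f" "M \<le> N"
  then obtain u where u: "laurent u" "f = (\<lambda>z. (z - 1) ^ N * u z)" unfolding MI_def by auto
  obtain d where d: "N = M + d" using \<open>M \<le> N\<close> le_Suc_ex by blast
  show "MI M f" unfolding MI_def
    by (rule exI[where x="\<lambda>z. (z - 1) ^ d * u z"]) (auto simp: u d laurent_zpow power_add)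
qed

lemma MI_Uk: "MI k (Uk k)"
  unfolding Uk_eq by (rule MI_zpow[OF laurent_one])

lemma MI_inv: "MI N f \<Longrightarrow> MI N (inv_arg f)"
proof -
  assume "MI N f"
  then obtain u where u: "laurent u" "f = (\<lambda>z. (z - 1) ^ N * u z)" unfolding MI_def by auto
  have l: "laurent (\<lambda>z. (-1) ^ N * (mask (\<lambda>z. inverse z ^ N) z * u (inverse z)))"
    by (intro laurent_scale laurent_mult laurent_mask_invpow laurent_inv u)
  show ?thesis unfolding MI_def
  proof (rule exI, rule conjI[OF l], rule ext)
    fix z :: complex
    show "inv_arg f z = (z - 1) ^ N * ((-1) ^ N * (mask (\<lambda>z. inverse z ^ N) z * u (inverse z)))"
    proof (cases "z = 0")
      case True then show ?thesis using laurent_at0[OF u(1)] by (simp add: inv_arg_def u mask_def)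
    next
      case False
      have "inverse z - 1 = (-1) * (z - 1) * inverse z" using False by (simp add: field_simps)
      moreover have "(1 - z) ^ N = (-1)^N * (z-1)^N"
      proof -
        have "(1 - z) ^ N = ((-1) * (z - 1)) ^ N" by simp
        also have "\<dots> = (-1)^N * (z-1)^N" by (rule power_mult_distrib)
        finally show ?thesis .
      qed
      ultimately show ?thesis using False
        by (simp add: inv_arg_def u mask_def power_mult_distrib)
    qed
  qed
qed



lemma MI_eq: "MI N f \<Longrightarrow> (\<And>z. f z = g z) \<Longrightarrow> MI N g"
proof -
  assume "MI N f" "\<And>z. f z = g z"
  then have "f = g" by auto
  with \<open>MI N f\<close> show ?thesis by simp
qed

lemma laurent_eq: "laurent f \<Longrightarrow> (\<And>z. f z = g z) \<Longrightarrow> laurent g"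
proof -
  assume "laurent f" "\<And>z. f z = g z"
  then have "f = g" by auto
  with \<open>laurent f\<close> show ?thesis by simp
qed

lemma laurent_zero_cofinite:
  assumes g: "laurent g" and F: "finite F" and z: "\<And>z. z \<notin> F \<Longrightarrow> g z = 0"
  shows "g w = 0"
proof -
  obtain P n where P0: "g 0 = 0" and P1: "\<And>z. z \<noteq> 0 \<Longrightarrow> g z = poly P z / z ^ n"
    using laurentE[OF g] by metis
  have "P = 0"
  proof (rule ccontr)
    assume nz: "P \<noteq> 0"
    have fin: "finite (F \<union> {0} \<union> {x. poly P x = 0})" using F poly_roots_finite[OF nz] by simp
    obtain y :: complex where y: "y \<notin> F \<union> {0} \<union> {x. poly P x = 0}"
      using ex_new_if_finite[OF infinite_UNIV_char_0 fin] by (elim exE)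
    have "g y = poly P y / y ^ n" using y by (intro P1) simp
    then have "g y \<noteq> 0" using y by simp
    moreover have "g y = 0" using z y by simp
    ultimately show False by simp
  qed
  then show ?thesis using P0 P1 by (cases "w = 0") simp_all
qed

lemma MI_one: "laurent f \<Longrightarrow> f 1 = 0 \<Longrightarrow> MI 1 f"
proof -
  assume f: "laurent f" "f 1 = 0"
  obtain P n where P0: "f 0 = 0" and P1: "\<And>z. z \<noteq> 0 \<Longrightarrow> f z = poly P z / z ^ n"
    using laurentE[OF f(1)] by metis
  have "poly P 1 = 0" using P1[of 1] f(2) by simp
  then have "[:-1, 1:] dvd P" using poly_eq_0_iff_dvd[of P 1] by simp
  then obtain Q where Q: "P = [:-1, 1:] * Q" by (elim dvdE)
  have lq: "laurent (mask (\<lambda>z. poly Q z / z ^ n))" unfolding laurent_def by blast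
  show ?thesis unfolding MI_def
  proof (rule exI, rule conjI[OF lq], rule ext)
    fix z :: complex
    show "f z = (z - 1) ^ 1 * mask (\<lambda>z. poly Q z / z ^ n) z"
    proof (cases "z = 0")
      case True then show ?thesis by (simp add: P0 mask_def)
    next
      case False
      then have "f z = poly P z / z ^ n" by (rule P1)
      also have "\<dots> = (z - 1) * poly Q z / z ^ n" unfolding Q by (simp add: algebra_simps)
      finally show ?thesis using False by (simp add: mask_def)
    qed
  qed
qed

lemma one_l_1[simp]: "one_l 1 = 1" by (simp add: one_l_def mask_def)

lemma MI_lead: "MI k f \<Longrightarrow> \<exists>c. MI (Suc k) (\<lambda>z. f z - c * Uk k z)"
proof -
  assume "MI k f"
  then obtain u where u: "laurent u" "f = (\<lambda>z. (z - 1) ^ k * u z)" unfolding MI_def by auto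
  have "MI 1 (\<lambda>z. u z - u 1 * one_l z)"
    by (rule MI_one) (auto intro!: laurent_diff laurent_scale u laurent_one)
  then obtain v where v: "laurent v" "(\<lambda>z. u z - u 1 * one_l z) = (\<lambda>z. (z - 1) ^ 1 * v z)"
    unfolding MI_def by auto
  have "MI (Suc k) (\<lambda>z. (z - 1) ^ (Suc k) * v z)" by (rule MI_zpow[OF v(1)])
  moreover have "(z - 1) ^ (Suc k) * v z = f z - u 1 * Uk k z" for z
  proof -
    have h: "u z - u 1 * one_l z = (z - 1) * v z" using fun_cong[OF v(2), of z] by simp
    have "f z - u 1 * Uk k z = (z - 1) ^ k * (u z - u 1 * one_l z)"
      unfolding u Uk_eq by (simp add: right_diff_distrib)
    also have "\<dots> = (z - 1) ^ (Suc k) * v z" by (simp add: h)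
    finally show ?thesis by simp
  qed
  ultimately show ?thesis by (auto intro: MI_eq)
qed

lemma MI_UkE: "MI (Suc k) (\<lambda>z. c * Uk k z) \<Longrightarrow> c = 0"
proof -
  assume "MI (Suc k) (\<lambda>z. c * Uk k z)"
  then obtain u where u: "laurent u" "(\<lambda>z. c * Uk k z) = (\<lambda>z. (z - 1) ^ Suc k * u z)"
    unfolding MI_def by auto
  have lg: "laurent (\<lambda>z. c * one_l z - (z - 1) * u z)"
    using laurent_diff[OF laurent_scale[OF laurent_one] laurent_zpow[OF u(1), of 1]] by simp
  have "(\<lambda>z. c * one_l z - (z - 1) * u z) 1 = 0"
  proof (rule laurent_zero_cofinite[OF lg, of "{0,1}"])
    fix z :: complex assume z: "z \<notin> {0, 1}"
    have "c * (z - 1) ^ k = (z - 1) ^ Suc k * u z"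
      using fun_cong[OF u(2), of z] z by (simp add: Uk_def mask_def)
    moreover have "(z - 1) ^ k * (c - (z - 1) * u z) = c * (z - 1) ^ k - (z - 1) ^ Suc k * u z"
      by (simp add: right_diff_distrib)
    ultimately have "(z - 1) ^ k * (c - (z - 1) * u z) = 0" by simp
    then have "c - (z - 1) * u z = 0" using z by simp
    then show "c * one_l z - (z - 1) * u z = 0" using z by (simp add: one_l_def mask_def)
  qed simp
  then show ?thesis by simp
qed


lemma Vk_lead: "MI (Suc k) (\<lambda>z. Vk k z - (-1) ^ k * Uk k z)"
proof -
  define w where "w = (\<lambda>z. (-1) ^ k * (mask (\<lambda>z. inverse z ^ k) z - one_l z))"
  have lw: "laurent w" unfolding w_def
    by (intro laurent_scale laurent_diff laurent_mask_invpow laurent_one)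
  have "MI 1 w" by (rule MI_one[OF lw]) (simp add: w_def mask_def)
  from MI_mult[OF MI_Uk[of k] this] have "MI (Suc k) (\<lambda>z. Uk k z * w z)" by simp
  then show ?thesis
  proof (rule MI_eq)
    fix z :: complex
    show "Uk k z * w z = Vk k z - (-1) ^ k * Uk k z"
    proof (cases "z = 0")
      case False
      have "inverse z - 1 = (-1) * (z - 1) * inverse z" using False by (simp add: field_simps)
      then have "(inverse z - 1) ^ k = (-1) ^ k * (z - 1) ^ k * inverse z ^ k"
        by (simp only: power_mult_distrib)
      then show ?thesis using False
        by (simp add: w_def Uk_def Vk_def mask_def one_l_def algebra_simps)
    qed (simp add: w_def Uk_def Vk_def mask_def one_l_def)
  qed
qed

lemma indep_gen:
  assumes fk: "\<forall>k<N. MI k (f k) \<and> MI (Suc k) (\<lambda>z. f k z - \<alpha> k * Uk k z) \<and> \<alpha> k \<noteq> 0"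
  and S: "MI N (\<lambda>z. \<Sum>k<N. c k * f k z)"
  shows "\<forall>k<N. c k = 0"
proof -
  have "k \<le> N \<Longrightarrow> \<forall>i<k. c i = 0" for k
  proof (induction k)
    case 0 then show ?case by simp
  next
    case (Suc k)
    then have IH: "\<forall>i<k. c i = 0" and kN: "k < N" by auto
    define T where "T = (\<lambda>z. \<Sum>i\<in>{Suc k..<N}. c i * f i z)"
    have MT: "MI (Suc k) T" unfolding T_def
    proof (rule MI_sum)
      fix i assume "i \<in> {Suc k..<N}"
      then have "MI i (f i)" "Suc k \<le> i" "i < N" using fk by auto
      then show "MI (Suc k) (\<lambda>z. c i * f i z)" by (intro MI_scale) (rule MI_mono)
    qed
    have split: "(\<Sum>i<N. c i * f i z) = c k * f k z + T z" for z
    proof -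
      have "(\<Sum>i<N. c i * f i z) = (\<Sum>i\<in>{0..<k}. c i * f i z) + (\<Sum>i\<in>{k..<N}. c i * f i z)"
        using kN by (simp add: lessThan_atLeast0 sum.atLeastLessThan_concat)
      also have "(\<Sum>i\<in>{0..<k}. c i * f i z) = 0" using IH by simp
      also have "(\<Sum>i\<in>{k..<N}. c i * f i z) = c k * f k z + T z"
        unfolding T_def using kN by (simp add: sum.atLeast_Suc_lessThan)
      finally show ?thesis by simp
    qed
    have "MI (Suc k) (\<lambda>z. \<Sum>i<N. c i * f i z)" using S kN by (auto intro: MI_mono)
    then have "MI (Suc k) (\<lambda>z. c k * f k z + T z)" using split by simp
    from MI_diff[OF this MT] have A: "MI (Suc k) (\<lambda>z. c k * f k z)" by simp
    have B: "MI (Suc k) (\<lambda>z. c k * (f k z - \<alpha> k * Uk k z))" using fk kN by (auto intro: MI_scale)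
    from MI_diff[OF A B] have "MI (Suc k) (\<lambda>z. (c k * \<alpha> k) * Uk k z)"
      by (simp add: algebra_simps)
    then have "c k * \<alpha> k = 0" by (rule MI_UkE)
    then have "c k = 0" using fk kN by auto
    with IH show ?case using less_Suc_eq by auto
  qed
  then show ?thesis by auto
qed

lemma span_gen:
  assumes fk: "\<forall>k<N. k \<in> K \<longrightarrow> (MI k (f k) \<and> MI (Suc k) (\<lambda>z. f k z - \<alpha> k * Uk k z) \<and> \<alpha> k \<noteq> 0)"
  and noK: "\<And>G n. Q G \<Longrightarrow> MI n G \<Longrightarrow> n < N \<Longrightarrow> n \<notin> K \<Longrightarrow> MI (Suc n) G"
  and Qsub: "\<And>G c k. Q G \<Longrightarrow> k \<in> K \<Longrightarrow> k < N \<Longrightarrow> Q (\<lambda>z. G z - c * f k z)"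
  and QL: "\<And>G. Q G \<Longrightarrow> laurent G"
  and QF: "Q F"
  shows "\<exists>c. (\<forall>k. k \<notin> K \<longrightarrow> c k = 0) \<and> MI N (\<lambda>z. F z - (\<Sum>k<N. c k * f k z))"
proof -
  have "n \<le> N \<Longrightarrow> \<exists>c. (\<forall>k. k \<notin> K \<longrightarrow> c k = 0) \<and> Q (\<lambda>z. F z - (\<Sum>k<n. c k * f k z))
           \<and> MI n (\<lambda>z. F z - (\<Sum>k<n. c k * f k z))" for n
  proof (induction n)
    case 0
    show ?case by (rule exI[of _ "\<lambda>k. 0"]) (simp add: QF MI_0 QL)
  next
    case (Suc n)
    then have nN: "n < N" by simp
    from Suc obtain c where c: "\<forall>k. k \<notin> K \<longrightarrow> c k = 0" "Q (\<lambda>z. F z - (\<Sum>k<n. c k * f k z))"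
      "MI n (\<lambda>z. F z - (\<Sum>k<n. c k * f k z))" by auto
    define G where "G = (\<lambda>z. F z - (\<Sum>k<n. c k * f k z))"
    have sumupd: "(\<Sum>k<Suc n. (c(n := d)) k * f k z) = (\<Sum>k<n. c k * f k z) + d * f n z" for d z
      by (simp add: sum.lessThan_Suc)
    show ?case
    proof (cases "n \<in> K")
      case False
      have "MI (Suc n) G" using noK[of G n] c nN False by (simp add: G_def)
      then show ?thesis using c False
        by (intro exI[of _ "c(n := 0)"]) (auto simp: sumupd G_def)
    next
      case True
      obtain d where d: "MI (Suc n) (\<lambda>z. G z - d * Uk k z)" if "k = n" for k
        using MI_lead[of n G] c(3) unfolding G_def by auto
      define e where "e = d / \<alpha> n"
      have an: "\<alpha> n \<noteq> 0" and fn: "MI (Suc n) (\<lambda>z. f n z - \<alpha> n * Uk n z)" using fk nN True by auto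
      have "MI (Suc n) (\<lambda>z. (G z - d * Uk n z) - e * (f n z - \<alpha> n * Uk n z))"
        by (intro MI_diff MI_scale d fn) simp
      then have M: "MI (Suc n) (\<lambda>z. G z - e * f n z)"
        by (rule MI_eq) (simp add: e_def an algebra_simps)
      have Q': "Q (\<lambda>z. G z - e * f n z)" using Qsub[of G n e] c(2) True nN by (simp add: G_def)
      show ?thesis using c True M Q'
        by (intro exI[of _ "c(n := e)"]) (auto simp: sumupd G_def algebra_simps)
    qed
  qed
  from this[of N] show ?thesis by auto
qed



definition sp :: "nat \<Rightarrow> nat \<Rightarrow> complex \<Rightarrow> complex" where
  "sp N m u = (\<Sum>k\<in>{m..<N}. (-1) ^ k * of_nat ((k - 1) choose (m - 1)) * u ^ k)"

lemma sp_step: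
  assumes "1 \<le> m"
  shows "sp (Suc (Suc n)) m u = sp (Suc n) m u + (-1) ^ Suc n * of_nat (n choose (m - 1)) * u ^ Suc n"
proof (cases "m \<le> Suc n")
  case True
  then have "{m..<Suc (Suc n)} = insert (Suc n) {m..<Suc n}" by auto
  then show ?thesis unfolding sp_def by (simp add: add.commute)
next
  case False
  then have "n < m - 1" using assms by simp
  then show ?thesis using False unfolding sp_def by simp
qed

lemma sp_base: "(1 + u) * sp (Suc n) 1 u = - u - (- u) ^ Suc n"
proof (induction n)
  case 0 then show ?case by (simp add: sp_def)
next
  case (Suc n)
  have st: "sp (Suc (Suc n)) 1 u = sp (Suc n) 1 u + (-1) ^ Suc n * u ^ Suc n"
    using sp_step[of 1 n u] by simp
  have pm: "(-1) ^ Suc n * u ^ Suc n = (- u) ^ Suc n" by (rule power_minus[symmetric])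
  have alg: "(- u - w) + (1 + u) * w = - u - (- u) * w" for w :: complex by (simp add: algebra_simps)
  have "(1 + u) * sp (Suc (Suc n)) 1 u = (1 + u) * sp (Suc n) 1 u + (1 + u) * ((-1) ^ Suc n * u ^ Suc n)"
    by (simp only: st distrib_left)
  also have "\<dots> = (- u - (- u) ^ Suc n) + (1 + u) * (- u) ^ Suc n"
    by (simp only: Suc.IH pm)
  also have "\<dots> = - u - (- u) * (- u) ^ Suc n" by (rule alg)
  also have "\<dots> = - u - (- u) ^ Suc (Suc n)" by (simp only: power_Suc)
  finally show ?case .
qed

lemma sp_D:
  assumes "1 \<le> m"
  shows "(1 + u) * sp (Suc n) (Suc m) u + u * sp (Suc n) m u = (-1) ^ n * of_nat (n choose m) * u ^ Suc n"
proof (induction n)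
  case 0 then show ?case using assms by (simp add: sp_def)
next
  case (Suc n)
  have pas: "of_nat (Suc n choose m) = (of_nat (n choose m) + of_nat (n choose (m - 1)) :: complex)"
    using assms by (cases m) simp_all
  have st1: "sp (Suc (Suc n)) (Suc m) u = sp (Suc n) (Suc m) u + (-1) ^ Suc n * of_nat (n choose m) * u ^ Suc n"
    using sp_step[of "Suc m" n u] by simp
  have st2: "sp (Suc (Suc n)) m u = sp (Suc n) m u + (-1) ^ Suc n * of_nat (n choose (m - 1)) * u ^ Suc n"
    using sp_step[of m n u] assms by simp
  have alg1: "(1 + u) * (A + X) + u * (B + Y) = ((1 + u) * A + u * B) + ((1 + u) * X + u * Y)"
    for A B X Y :: complex by (simp add: algebra_simps)
  have alg2: "e * a * p + ((1 + u) * ((-1) * e * a * p) + u * ((-1) * e * b * p)) = ((-1) * e) * (a + b) * (u * p)"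
    for e a b p :: complex by (simp add: algebra_simps)
  have "(1 + u) * sp (Suc (Suc n)) (Suc m) u + u * sp (Suc (Suc n)) m u
     = ((1 + u) * sp (Suc n) (Suc m) u + u * sp (Suc n) m u)
       + ((1 + u) * ((-1) ^ Suc n * of_nat (n choose m) * u ^ Suc n)
       + u * ((-1) ^ Suc n * of_nat (n choose (m - 1)) * u ^ Suc n))"
    unfolding st1 st2 by (rule alg1)
  also have "\<dots> = (-1) ^ n * of_nat (n choose m) * u ^ Suc n
       + ((1 + u) * ((-1) * (-1) ^ n * of_nat (n choose m) * u ^ Suc n)
       + u * ((-1) * (-1) ^ n * of_nat (n choose (m - 1)) * u ^ Suc n))"
    by (simp only: Suc.IH power_Suc)
  also have "\<dots> = ((-1) * (-1) ^ n) * (of_nat (n choose m) + of_nat (n choose (m - 1))) * (u * u ^ Suc n)"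
    by (rule alg2)
  also have "\<dots> = (-1) ^ Suc n * of_nat (Suc n choose m) * u ^ Suc (Suc n)"
    by (simp only: pas power_Suc)
  finally show ?case .
qed

definition SL :: "nat \<Rightarrow> nat \<Rightarrow> lp" where
  "SL N m = (\<lambda>z. sp N m (z - 1) * one_l z)"

lemma laurent_SL: "laurent (SL N m)"
proof -
  have "laurent (\<lambda>z. (\<Sum>k\<in>{m..<N}. (-1) ^ k * of_nat ((k - 1) choose (m - 1)) * Uk k z))"
    by (intro laurent_sum laurent_scale laurent_Uk)
  then show ?thesis
    by (rule laurent_eq) (simp add: SL_def sp_def Uk_eq sum_distrib_right mult.assoc)
qed

lemma laurent_mask_inverse: "laurent (mask (\<lambda>z. inverse z))"
  using laurent_mask_invpow[of 1] by simp

lemma MI_cancel_z: "MI N (\<lambda>z. z * f z) \<Longrightarrow> laurent f \<Longrightarrow> MI N f"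
proof -
  assume a: "MI N (\<lambda>z. z * f z)" "laurent f"
  from MI_multl[OF a(1) laurent_mask_inverse] show ?thesis
  proof (rule MI_eq)
    fix z :: complex
    show "mask (\<lambda>z. inverse z) z * (z * f z) = f z"
      using laurent_at0[OF a(2)] by (cases "z = 0") (auto simp: mask_def)
  qed
qed

lemma alg_base: "- (z - 1) - w - (1 - z) = - (w::complex)" by simp

lemma alg_step:
  fixes z u A B C E X :: complex
  assumes "z * A + u * B = X" "z * C + u * E = 0"
  shows "X - u * (B - E) = z * (A - C)"
proof -
  have "X - u * (B - E) = (z * A + u * B) - u * B + u * E" using assms(1) by (simp add: right_diff_distrib)
  also have "\<dots> = z * A + u * E" by simp
  also have "u * E = - (z * C)" using assms(2) by (simp add: add_eq_0_iff)
  finally show ?thesis by (simp add: right_diff_distrib)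
qed

lemma K2:
  assumes m: "1 \<le> m" and N: "1 \<le> N"
  shows "MI N (\<lambda>z. SL N m z - Vk m z)"
  using m
proof (induction m rule: dec_induct)
  case base
  obtain n where n: "N = Suc n" using N by (cases N) auto
  have "MI N (\<lambda>z. (z - 1) ^ N * (- ((-1) ^ N * one_l z)))"
    by (intro MI_zpow laurent_uminus laurent_scale laurent_one)
  then have "MI N (\<lambda>z. z * (SL N 1 z - Vk 1 z))"
  proof (rule MI_eq)
    fix z :: complex
    show "(z - 1) ^ N * (- ((-1) ^ N * one_l z)) = z * (SL N 1 z - Vk 1 z)"
    proof (cases "z = 0")
      case True then show ?thesis by (simp add: one_l_def mask_def)
    next
      case False
      have e: "z * sp N 1 (z - 1) = - (z - 1) - (- (z - 1)) ^ N"
        using sp_base[where n=n and u="z - 1"] n by simp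
      have s1: "SL N 1 z = sp N 1 (z - 1)" by (simp add: SL_def one_l_def mask_def False)
      have v1: "Vk 1 z = inverse z - 1" by (simp add: Vk_def mask_def False)
      have zi: "z * (inverse z - 1) = 1 - z" using False by (simp add: right_diff_distrib)
      have "z * (SL N 1 z - Vk 1 z) = z * sp N 1 (z - 1) - z * (inverse z - 1)"
        by (simp only: s1 v1 right_diff_distrib)
      also have "\<dots> = - ((- (z - 1)) ^ N)"
        by (simp only: e zi alg_base)
      also have "\<dots> = - ((-1) ^ N * (z - 1) ^ N)"
        by (simp only: power_minus[of "z - 1"])
      also have "\<dots> = (z - 1) ^ N * (- ((-1) ^ N * one_l z))"
        using False by (simp add: one_l_def mask_def)
      finally show ?thesis by simp
    qed
  qed
  then show ?case by (rule MI_cancel_z) (intro laurent_diff laurent_SL laurent_Vk)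
next
  case (step m)
  obtain n where n: "N = Suc n" using N by (cases N) auto
  have A: "MI N (\<lambda>z. (z - 1) ^ N * ((-1) ^ n * of_nat (n choose m) * one_l z))"
    by (intro MI_zpow laurent_scale laurent_one)
  have B: "MI N (\<lambda>z. (z - 1) * (SL N m z - Vk m z))"
    using MI_multl[OF step.IH laurent_Uk[of 1]]
  proof (rule MI_eq)
    fix z :: complex
    show "Uk 1 z * (SL N m z - Vk m z) = (z - 1) * (SL N m z - Vk m z)"
      by (cases "z = 0") (simp_all add: Uk_def mask_def SL_def Vk_def one_l_def)
  qed
  from MI_diff[OF A B] have "MI N (\<lambda>z. z * (SL N (Suc m) z - Vk (Suc m) z))"
  proof (rule MI_eq)
    fix z :: complex
    show "(z - 1) ^ N * ((-1) ^ n * of_nat (n choose m) * one_l z) - (z - 1) * (SL N m z - Vk m z)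
          = z * (SL N (Suc m) z - Vk (Suc m) z)"
    proof (cases "z = 0")
      case True then show ?thesis by (simp add: one_l_def mask_def SL_def Vk_def)
    next
      case False
      have D: "z * sp N (Suc m) (z - 1) + (z - 1) * sp N m (z - 1) = (z - 1) ^ N * ((-1) ^ n * of_nat (n choose m) * one_l z)"
        using sp_D[OF step.hyps(1), where n=n and u="z - 1"] n False by (simp add: one_l_def mask_def mult.commute)
      have V: "z * (inverse z - 1) ^ Suc m + (z - 1) * (inverse z - 1) ^ m = 0"
      proof -
        have "z * (inverse z - 1) ^ Suc m + (z - 1) * (inverse z - 1) ^ m
              = (inverse z - 1) ^ m * (z * (inverse z - 1) + (z - 1))"
          by (simp add: algebra_simps)
        also have "z * (inverse z - 1) + (z - 1) = 0" using False by (simp add: right_diff_distrib)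
        finally show ?thesis by simp
      qed
      have sv: "SL N k z = sp N k (z - 1)" "Vk k z = (inverse z - 1) ^ k" for k
        using False by (simp_all add: SL_def Vk_def one_l_def mask_def)
      show ?thesis unfolding sv by (rule alg_step[OF D V])
    qed
  qed
  then show ?case by (rule MI_cancel_z) (intro laurent_diff laurent_SL laurent_Vk)
qed



definition trip :: "lp \<Rightarrow> lp \<Rightarrow> oa_elt" where "trip p r = (p, inv_arg p, r)"
definition antis :: "lp \<Rightarrow> bool" where "antis r \<longleftrightarrow> (\<forall>z. r (inverse z) = - r z)"

lemma trip_add: "trip p r + trip p' r' = trip (\<lambda>z. p z + p' z) (\<lambda>z. r z + r' z)"
  by (simp add: trip_def inv_arg_def plus_fun_def)

lemma trip_diff: "trip p r - trip p' r' = trip (\<lambda>z. p z - p' z) (\<lambda>z. r z - r' z)"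
  by (simp add: trip_def inv_arg_def fun_diff_def)

lemma trip_scale: "elt_scale c (trip p r) = trip (\<lambda>z. c * p z) (\<lambda>z. c * r z)"
  by (simp add: trip_def inv_arg_def elt_scale_def)

lemma trip_zero: "trip (\<lambda>z. 0) (\<lambda>z. 0) = 0"
  by (simp add: trip_def inv_arg_def zero_prod_def zero_fun_def)

lemma trip_sum: "(\<Sum>j\<in>A. trip (p j) (r j)) = trip (\<lambda>z. \<Sum>j\<in>A. p j z) (\<lambda>z. \<Sum>j\<in>A. r j z)"
proof (induction A rule: infinite_finite_induct)
  case (infinite A) then show ?case by (simp add: trip_zero)
next
  case empty then show ?case by (simp add: trip_zero)
next
  case (insert x F) then show ?case by (simp add: trip_add)
qed

lemma trip_Onsager: "trip p r \<in> Onsager \<longleftrightarrow> laurent p \<and> laurent r \<and> antis r"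
proof -
  have "inv_arg r = - r \<longleftrightarrow> antis r"
    unfolding antis_def inv_arg_def fun_Compl_def by (auto simp: fun_eq_iff)
  then show ?thesis by (auto simp: trip_def Onsager_def)
qed

lemma Onsager_trip: "x \<in> Onsager \<Longrightarrow> \<exists>p r. x = trip p r \<and> laurent p \<and> laurent r \<and> antis r"
proof -
  assume "x \<in> Onsager"
  then obtain p r where x: "x = trip p r" and "laurent p" "laurent r" "inv_arg r = - r"
    unfolding Onsager_def trip_def by auto
  moreover have "antis r" using \<open>inv_arg r = - r\<close>
    unfolding antis_def inv_arg_def fun_Compl_def by (metis)
  ultimately show ?thesis by blast
qed

lemma trip_ideal: "trip p r \<in> onsager_ideal N \<longleftrightarrow> laurent p \<and> laurent r \<and> antis r \<and> MI N p \<and> MI N r"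
proof -
  have "trip p r \<in> onsager_ideal N \<longleftrightarrow> trip p r \<in> Onsager \<and> MI N p \<and> MI N r"
    unfolding onsager_ideal_def MI_def trip_def by auto
  then show ?thesis using trip_Onsager by (auto intro: MI_laurent)
qed

lemma trip_idealI: "MI N p \<Longrightarrow> MI N r \<Longrightarrow> antis r \<Longrightarrow> trip p r \<in> onsager_ideal N"
  using trip_ideal MI_laurent by blast

lemma bracket_trip:
  assumes "antis R1" "antis R2"
  shows "loop_bracket (trip P1 R1) (trip P2 R2)
    = trip (\<lambda>z. 2 * (R1 z * P2 z - P1 z * R2 z)) (\<lambda>z. P1 z * inv_arg P2 z - inv_arg P1 z * P2 z)"
proof -
  have a: "R1 (inverse z) = - R1 z" "R2 (inverse z) = - R2 z" for z
    using assms unfolding antis_def by auto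
  show ?thesis
    unfolding loop_bracket_def trip_def
    by (simp add: fun_eq_iff inv_arg_def a algebra_simps)
qed

lemma antis_zero: "antis (\<lambda>z. 0)" by (simp add: antis_def)

lemma one_l_mult: "laurent f \<Longrightarrow> one_l z * f z = f z"
  using laurent_at0[of f] by (cases "z = 0") (auto simp: one_l_def mask_def)

lemma inv_arg_one_l: "inv_arg one_l = one_l"
  by (auto simp: inv_arg_def one_l_def mask_def fun_eq_iff)

lemma Xel_eq: "Xel k = trip (\<lambda>z. 2 * Uk k z) (\<lambda>z. 0)"
  by (auto simp: Xel_def trip_def inv_arg_def Uk_def mask_def fun_eq_iff zero_fun_def)

lemma Yel_eq: "Yel k = trip (\<lambda>z. 0) (\<lambda>z. (-1) ^ k * (Uk k z - Vk k z))"
  by (auto simp: Yel_def trip_def inv_arg_def Uk_def Vk_def mask_def fun_eq_iff zero_fun_def)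

lemma Uk0: "Uk 0 = one_l" by (simp add: Uk_def one_l_def)

lemma bracket_X0:
  assumes "laurent P" "laurent R" "antis R"
  shows "loop_bracket (Xel 0) (trip P R) = trip (\<lambda>z. -4 * R z) (\<lambda>z. 2 * (inv_arg P z - P z))"
proof -
  have "loop_bracket (Xel 0) (trip P R)
      = trip (\<lambda>z. 2 * (0 * P z - 2 * one_l z * R z)) (\<lambda>z. 2 * one_l z * inv_arg P z - inv_arg (\<lambda>z. 2 * one_l z) z * P z)"
    unfolding Xel_eq Uk0 by (rule bracket_trip[OF antis_zero assms(3)])
  also have "\<dots> = trip (\<lambda>z. -4 * R z) (\<lambda>z. 2 * (inv_arg P z - P z))"
  proof -
    have "inv_arg (\<lambda>z. 2 * one_l z) = (\<lambda>z. 2 * one_l z)"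
      using inv_arg_one_l by (simp add: inv_arg_def fun_eq_iff)
    moreover have "one_l z * R z = R z" for z using one_l_mult[OF assms(2)] .
    moreover have "one_l z * P z = P z" for z using one_l_mult[OF assms(1)] .
    moreover have "one_l z * inv_arg P z = inv_arg P z" for z using one_l_mult[OF laurent_inv_arg[OF assms(1)]] .
    ultimately have e1: "(\<lambda>z. 2 * (0 * P z - 2 * one_l z * R z)) = (\<lambda>z. -4 * R z)"
      and e2: "(\<lambda>z. 2 * one_l z * inv_arg P z - inv_arg (\<lambda>z. 2 * one_l z) z * P z) = (\<lambda>z. 2 * (inv_arg P z - P z))"
    proof -
      assume h1: "inv_arg (\<lambda>z. 2 * one_l z) = (\<lambda>z. 2 * one_l z)"
        and h2: "\<And>z. one_l z * R z = R z" and h3: "\<And>z. one_l z * P z = P z"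
        and h4: "\<And>z. one_l z * inv_arg P z = inv_arg P z"
      show "(\<lambda>z. 2 * (0 * P z - 2 * one_l z * R z)) = (\<lambda>z. -4 * R z)"
      proof
        fix z
        have "2 * (0 * P z - 2 * one_l z * R z) = -4 * (one_l z * R z)" by simp
        then show "2 * (0 * P z - 2 * one_l z * R z) = -4 * R z" by (simp only: h2)
      qed
      show "(\<lambda>z. 2 * one_l z * inv_arg P z - inv_arg (\<lambda>z. 2 * one_l z) z * P z) = (\<lambda>z. 2 * (inv_arg P z - P z))"
      proof
        fix z
        have "2 * one_l z * inv_arg P z - inv_arg (\<lambda>z. 2 * one_l z) z * P z
              = 2 * (one_l z * inv_arg P z) - 2 * (one_l z * P z)" by (simp add: h1)
        then show "2 * one_l z * inv_arg P z - inv_arg (\<lambda>z. 2 * one_l z) z * P z = 2 * (inv_arg P z - P z)"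
          by (simp only: h3 h4 right_diff_distrib)
      qed
    qed
    show ?thesis by (simp only: e1 e2)
  qed
  finally show ?thesis .
qed

definition eqv :: "nat \<Rightarrow> lp \<Rightarrow> lp \<Rightarrow> bool" where
  "eqv N f g \<longleftrightarrow> MI N (\<lambda>z. f z - g z)"

lemma eqv_refl: "eqv N f f" by (simp add: eqv_def MI_zero)

lemma eqv_sym: "eqv N f g \<Longrightarrow> eqv N g f"
  unfolding eqv_def by (drule MI_uminus) simp

lemma eqv_trans: "eqv N f g \<Longrightarrow> eqv N g h \<Longrightarrow> eqv N f h"
  unfolding eqv_def by (drule (1) MI_add) simp

lemma eqv_add: "eqv N f f' \<Longrightarrow> eqv N g g' \<Longrightarrow> eqv N (\<lambda>z. f z + g z) (\<lambda>z. f' z + g' z)"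
  unfolding eqv_def by (drule (1) MI_add) (simp add: algebra_simps)

lemma eqv_diff: "eqv N f f' \<Longrightarrow> eqv N g g' \<Longrightarrow> eqv N (\<lambda>z. f z - g z) (\<lambda>z. f' z - g' z)"
  unfolding eqv_def by (drule (1) MI_diff) (simp add: algebra_simps)

lemma eqv_scale: "eqv N f g \<Longrightarrow> eqv N (\<lambda>z. c * f z) (\<lambda>z. c * g z)"
  unfolding eqv_def by (drule MI_scale[where c=c]) (simp add: algebra_simps)

lemma eqv_sum: "(\<And>a. a \<in> A \<Longrightarrow> eqv N (f a) (g a)) \<Longrightarrow> eqv N (\<lambda>z. \<Sum>a\<in>A. f a z) (\<lambda>z. \<Sum>a\<in>A. g a z)"
  unfolding eqv_def by (drule MI_sum) (simp add: sum_subtractf)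

lemma eqv_inv: "eqv N f g \<Longrightarrow> eqv N (inv_arg f) (inv_arg g)"
  unfolding eqv_def by (drule MI_inv) (simp add: inv_arg_def)

lemma eqv_MI: "eqv N f g \<Longrightarrow> MI N g \<Longrightarrow> MI N f"
  unfolding eqv_def by (drule (1) MI_add) simp

lemma MI_eqv: "MI N f \<Longrightarrow> eqv N f (\<lambda>z. 0)"
  unfolding eqv_def by simp

lemma eqv_eq: "eqv N f g \<Longrightarrow> (\<And>z. f z = f' z) \<Longrightarrow> (\<And>z. g z = g' z) \<Longrightarrow> eqv N f' g'"
proof -
  assume "eqv N f g" "\<And>z. f z = f' z" "\<And>z. g z = g' z"
  then have "f = f'" "g = g'" by auto
  with \<open>eqv N f g\<close> show ?thesis by simp
qed

definition Zf :: "nat \<Rightarrow> nat \<Rightarrow> lp" where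
  "Zf l j = (if j = 1 then (\<lambda>z. 2 * one_l z) else
     (\<lambda>z. \<Sum>k\<in>{2*j-2..2*l-1}. (-1) ^ k * of_nat ((k - 1) choose (2*j-4)) * (2 * Uk k z)))"

definition Wf :: "nat \<Rightarrow> nat \<Rightarrow> lp" where
  "Wf l j = (\<lambda>z. 2 * Uk (2*j-1) z -
     (\<Sum>k\<in>{2*j-1..2*l-1}. (-1) ^ k * of_nat ((k - 1) choose (2*j-2)) * (2 * Uk k z)))"

definition Rf :: "nat \<Rightarrow> lp" where
  "Rf j = (\<lambda>z. 2 * ((-1) ^ (2*j-1) * (Uk (2*j-1) z - Vk (2*j-1) z)))"

lemma zero_vec_eq: "1 \<le> j \<Longrightarrow> zero_vec l j = trip (Zf l j) (\<lambda>z. 0)"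
  by (cases "j = 1") (simp_all add: zero_vec_def Zf_def Xel_eq Uk0 trip_scale trip_sum)

lemma pm_vec_eq: "pm_vec l s j = trip (\<lambda>z. s * Wf l j z) (Rf j)"
  unfolding pm_vec_def Xel_eq Yel_eq trip_scale trip_sum trip_diff trip_add Wf_def Rf_def
  by simp

lemma laurent_Zf: "laurent (Zf l j)"
  unfolding Zf_def by (auto intro!: laurent_scale laurent_sum laurent_Uk laurent_one)

lemma laurent_Wf: "laurent (Wf l j)"
  unfolding Wf_def by (auto intro!: laurent_diff laurent_scale laurent_sum laurent_Uk)

lemma laurent_Rf: "laurent (Rf j)"
  unfolding Rf_def by (auto intro!: laurent_diff laurent_scale laurent_Vk laurent_Uk)

lemma Uk_inv: "Uk k (inverse z) = Vk k z" using fun_cong[OF inv_arg_Uk[of k], of z] by (simp add: inv_arg_def)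
lemma Vk_inv: "Vk k (inverse z) = Uk k z" using fun_cong[OF inv_arg_Vk[of k], of z] by (simp add: inv_arg_def)

lemma odd_sign: "1 \<le> j \<Longrightarrow> (-1::complex) ^ (2*j-1) = -1"
  by (simp add: odd_pos)

lemma Rf_eq: "1 \<le> j \<Longrightarrow> Rf j = (\<lambda>z. -2 * (Uk (2*j-1) z - Vk (2*j-1) z))"
  unfolding Rf_def by (simp only: odd_sign) simp

lemma antis_Rf: "1 \<le> j \<Longrightarrow> antis (Rf j)"
  unfolding antis_def by (simp add: Rf_eq Uk_inv Vk_inv algebra_simps)

lemma SL_eq: "1 \<le> N \<Longrightarrow> SL N m z = (\<Sum>k\<in>{m..N-1}. (-1) ^ k * of_nat ((k - 1) choose (m - 1)) * Uk k z)"
proof -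
  assume "1 \<le> N"
  then have "{m..<N} = {m..N-1}" by auto
  then show ?thesis
    by (simp add: SL_def sp_def Uk_eq sum_distrib_right mult.assoc)
qed

lemma Wf_SL: "1 \<le> l \<Longrightarrow> Wf l j z = 2 * Uk (2*j-1) z - 2 * SL (2*l) (2*j-1) z"
proof -
  assume l: "1 \<le> l"
  have "2 * j - 1 - 1 = 2 * j - 2" by simp
  then show ?thesis using l unfolding Wf_def
    by (simp add: SL_eq sum_distrib_left algebra_simps)
qed

lemma W_R: "1 \<le> l \<Longrightarrow> 1 \<le> j \<Longrightarrow> eqv (2*l) (Wf l j) (\<lambda>z. - Rf j z)"
proof -
  assume l: "1 \<le> l" and j: "1 \<le> j"
  have o: "(-1::complex) ^ (2*j-1) = -1" using j by (simp add: odd_pos)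
  have "MI (2*l) (\<lambda>z. (-2) * (SL (2*l) (2*j-1) z - Vk (2*j-1) z))"
    using K2[of "2*j-1" "2*l"] l j by (intro MI_scale) simp
  then show ?thesis unfolding eqv_def
    by (rule MI_eq) (simp add: Wf_SL[OF l] Rf_eq[OF j] algebra_simps)
qed

lemma inv_neg: "inv_arg (\<lambda>z. - f z) = (\<lambda>z. - inv_arg f z)" by (simp add: inv_arg_def)

lemma W_R2: "1 \<le> l \<Longrightarrow> 1 \<le> j \<Longrightarrow> eqv (2*l) (\<lambda>z. inv_arg (Wf l j) z - Wf l j z) (\<lambda>z. 2 * Rf j z)"
proof -
  assume l: "1 \<le> l" and j: "1 \<le> j"
  have a: "eqv (2*l) (inv_arg (Wf l j)) (Rf j)"
  proof -
    have "eqv (2*l) (inv_arg (Wf l j)) (inv_arg (\<lambda>z. - Rf j z))" by (rule eqv_inv[OF W_R[OF l j]])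
    moreover have "inv_arg (\<lambda>z. - Rf j z) = Rf j"
      using antis_Rf[OF j] by (simp add: inv_arg_def antis_def)
    ultimately show ?thesis by simp
  qed
  from eqv_diff[OF a W_R[OF l j]] show ?thesis
    by (rule eqv_eq) simp_all
qed

lemma tail_MI: "MI d (\<lambda>z. \<Sum>k\<in>{d..M}. w k * Uk k z)"
  by (rule MI_sum) (auto intro: MI_scale MI_mono[OF MI_Uk])

lemma tail_lead: "d \<le> M \<Longrightarrow> MI (Suc d) (\<lambda>z. (\<Sum>k\<in>{d..M}. w k * Uk k z) - w d * Uk d z)"
  using tail_MI[where d="Suc d" and M=M and w=w] by (simp add: sum.atLeast_Suc_atMost)

lemma Zf_SS: "Zf l (Suc (Suc i)) = (\<lambda>z. \<Sum>k\<in>{2*i+2..2*l-1}. ((-1) ^ k * of_nat ((k - 1) choose (2*i)) * 2) * Uk k z)"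
proof -
  have a: "2 * Suc (Suc i) - 2 = 2*i+2" "2 * Suc (Suc i) - 4 = 2*i" by simp_all
  show ?thesis unfolding Zf_def a by (simp add: mult.assoc)
qed

lemma Wf_S: "Wf l (Suc i) = (\<lambda>z. 2 * Uk (2*i+1) z - (\<Sum>k\<in>{2*i+1..2*l-1}. ((-1) ^ k * of_nat ((k - 1) choose (2*i)) * 2) * Uk k z))"
proof -
  have a: "2 * Suc i - 1 = 2*i+1" "2 * Suc i - 2 = 2*i" by simp_all
  show ?thesis unfolding Wf_def a by (simp add: mult.assoc)
qed

definition alphaZ :: "nat \<Rightarrow> complex" where
  "alphaZ j = (if j = 1 then 2 else 2 * of_nat (2*j-3))"

lemma alphaZ_nz: "1 \<le> j \<Longrightarrow> alphaZ j \<noteq> 0"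
proof (cases "j = 1")
  case True then show ?thesis by (simp add: alphaZ_def)
next
  case False
  assume j: "1 \<le> j"
  have a: "alphaZ j = 2 * of_nat (2*j-3)" using False by (simp add: alphaZ_def)
  have "(of_nat (2*j-3) :: complex) \<noteq> 0" using False j by (simp only: of_nat_eq_0_iff)
  then show ?thesis unfolding a by (metis mult_eq_0_iff zero_neq_numeral)
qed

lemma Zf_order:
  assumes "1 \<le> j" "j \<le> l"
  shows "MI (2*j-2) (Zf l j) \<and> MI (Suc (2*j-2)) (\<lambda>z. Zf l j z - alphaZ j * Uk (2*j-2) z)"
proof (cases "j = 1")
  case True
  have "MI 0 (Zf l j)" by (rule MI_0[OF laurent_Zf])
  moreover have "MI 1 (\<lambda>z. Zf l j z - alphaZ j * Uk (2*j-2) z)"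
    using MI_zero[of 1] by (rule MI_eq) (simp add: True Zf_def alphaZ_def Uk0)
  ultimately show ?thesis using True by simp
next
  case False
  then obtain i where i: "j = Suc (Suc i)" using assms(1) by (metis One_nat_def Suc_le_D le_SucE not_less_eq_eq)
  have le: "2*i+2 \<le> 2*l-1" using assms(2) i by simp
  have w: "(-1) ^ (2*i+2) * of_nat ((2*i+2 - 1) choose (2*i)) * 2 = (alphaZ j :: complex)"
    using i by (simp add: alphaZ_def)
  have A: "MI (2*i+2) (Zf l j)" unfolding i Zf_SS by (rule tail_MI)
  have B: "MI (Suc (2*i+2)) (\<lambda>z. Zf l j z - alphaZ j * Uk (2*i+2) z)"
    using tail_lead[OF le, where w="\<lambda>k. (-1) ^ k * of_nat ((k - 1) choose (2*i)) * 2"]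
    unfolding i Zf_SS w[unfolded i] .
  have c: "2*j-2 = 2*i+2" using i by simp
  show ?thesis unfolding c using A B by simp
qed

lemma Wf_order:
  assumes "1 \<le> j" "j \<le> l"
  shows "MI (2*j-1) (Wf l j) \<and> MI (Suc (2*j-1)) (\<lambda>z. Wf l j z - 4 * Uk (2*j-1) z)"
proof -
  obtain i where i: "j = Suc i" using assms(1) by (cases j) auto
  have le: "2*i+1 \<le> 2*l-1" using assms(2) i by simp
  let ?w = "\<lambda>k. (-1) ^ k * of_nat ((k - 1) choose (2*i)) * (2::complex)"
  have w: "?w (2*i+1) = -2" by simp
  have A: "MI (2*i+1) (Wf l j)" unfolding i Wf_S
    by (intro MI_diff MI_scale MI_Uk tail_MI)
  have B: "MI (Suc (2*i+1)) (\<lambda>z. Wf l j z - 4 * Uk (2*i+1) z)"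
    using MI_uminus[OF tail_lead[OF le, where w="?w"]] unfolding i Wf_S w
    by (rule MI_eq) (simp add: algebra_simps)
  have c: "2*j-1 = 2*i+1" using i by simp
  show ?thesis unfolding c using A B by simp
qed

lemma Rf_order:
  assumes "1 \<le> j"
  shows "MI (2*j-1) (Rf j) \<and> MI (Suc (2*j-1)) (\<lambda>z. Rf j z - (-4) * Uk (2*j-1) z)"
proof -
  have o: "(-1::complex) ^ (2*j-1) = -1" by (rule odd_sign[OF assms])
  have V: "MI (2*j-1) (Vk (2*j-1))" using MI_inv[OF MI_Uk[of "2*j-1"]] by (simp add: inv_arg_Uk)
  have A: "MI (2*j-1) (Rf j)" unfolding Rf_eq[OF assms]
    by (intro MI_scale MI_diff MI_Uk V)
  have B: "MI (Suc (2*j-1)) (\<lambda>z. Rf j z - (-4) * Uk (2*j-1) z)"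
    using MI_scale[OF Vk_lead[of "2*j-1"], of 2] unfolding o Rf_eq[OF assms]
    by (rule MI_eq) (simp add: algebra_simps)
  show ?thesis using A B by simp
qed

lemma Z_sym:
  assumes l: "1 \<le> l" and j: "1 \<le> j" "j \<le> l"
  shows "eqv (2*l) (inv_arg (Zf l j)) (Zf l j)"
proof (cases "j = 1")
  case True
  have "inv_arg (Zf l j) = Zf l j" using inv_arg_one_l
    by (simp add: True Zf_def inv_arg_def fun_eq_iff)
  then show ?thesis by (simp add: eqv_refl)
next
  case False
  then obtain i where i: "j = Suc (Suc i)" using j(1) by (metis One_nat_def Suc_le_D le_SucE not_less_eq_eq)
  let ?m = "2*i+1"
  have le: "?m \<le> 2*l-1" using j(2) i by simp
  have Zeq: "Zf l j z = 2 * (SL (2*l) ?m z + Uk ?m z)" for z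
  proof -
    let ?f = "\<lambda>k. (-1) ^ k * of_nat ((k - 1) choose (2*i)) * Uk k z"
    have s1: "SL (2*l) ?m z = sum ?f {?m..2*l-1}"
      using SL_eq[of "2*l" ?m z] l by simp
    have s2: "sum ?f {?m..2*l-1} = ?f ?m + sum ?f {Suc ?m..2*l-1}"
      by (rule sum.atLeast_Suc_atMost[OF le])
    have s3: "?f ?m = - Uk ?m z" by simp
    have s4: "Suc ?m = 2*i+2" by simp
    have s5: "Zf l j z = 2 * sum ?f {2*i+2..2*l-1}"
      unfolding i Zf_SS sum_distrib_left by (rule sum.cong) (simp_all add: mult_ac)
    show ?thesis unfolding s5 s1 s2 s3 s4 by simp
  qed
  have e1: "eqv (2*l) (Zf l j) (\<lambda>z. 2 * (Vk ?m z + Uk ?m z))"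
  proof -
    have k: "MI (2*l) (\<lambda>z. SL (2*l) ?m z - Vk ?m z)" using K2[of ?m "2*l"] l by simp
    show ?thesis unfolding eqv_def
      by (rule MI_eq[OF MI_scale[OF k, of 2]]) (simp add: Zeq algebra_simps)
  qed
  have e2: "eqv (2*l) (inv_arg (Zf l j)) (\<lambda>z. 2 * (Uk ?m z + Vk ?m z))"
    using eqv_inv[OF e1] by (simp add: inv_arg_def Uk_inv Vk_inv)
  have e3: "eqv (2*l) (\<lambda>z. 2 * (Uk ?m z + Vk ?m z)) (\<lambda>z. 2 * (Vk ?m z + Uk ?m z))"
    by (rule eqv_eq[OF eqv_refl]) (simp_all add: add.commute)
  show ?thesis using eqv_trans[OF eqv_trans[OF e2 e3] eqv_sym[OF e1]] .
qed

lemma antis_even: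
  assumes G: "laurent G" "antis G" and M: "MI n G" and e: "even n"
  shows "MI (Suc n) G"
proof -
  obtain d where d: "MI (Suc n) (\<lambda>z. G z - d * Uk n z)" using MI_lead[OF M] by blast
  have ig: "inv_arg G = (\<lambda>z. - G z)" using G(2) by (simp add: antis_def inv_arg_def)
  have d2: "MI (Suc n) (\<lambda>z. - G z - d * Vk n z)"
    using MI_inv[OF d] by (simp add: inv_arg_def Uk_inv ig[unfolded inv_arg_def fun_eq_iff, rule_format])
  have vl: "MI (Suc n) (\<lambda>z. Vk n z - Uk n z)" using Vk_lead[of n] e by simp
  have "MI (Suc n) (\<lambda>z. (G z - d * Uk n z) + (- G z - d * Vk n z) + d * (Vk n z - Uk n z))"
    by (intro MI_add d d2 MI_scale vl)
  then have "MI (Suc n) (\<lambda>z. (-2 * d) * Uk n z)"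
    by (rule MI_eq) (simp add: algebra_simps)
  then have "-2 * d = 0" by (rule MI_UkE)
  then have "d = 0" by simp
  then show ?thesis using d by simp
qed

lemma reindex: "(\<Sum>j\<in>{1..(l::nat)}. F (2*j-2) + F (2*j-1)) = (\<Sum>k<2*l. F k)"
proof (induction l)
  case 0 then show ?case by simp
next
  case (Suc l)
  have "(\<Sum>j\<in>{1..Suc l}. F (2*j-2) + F (2*j-1)) = (\<Sum>j\<in>{1..l}. F (2*j-2) + F (2*j-1)) + (F (2*l) + F (2*l+1))"
    by simp
  also have "\<dots> = (\<Sum>k<2*l. F k) + F (2*l) + F (2*l+1)" using Suc by (simp add: add.assoc)
  also have "\<dots> = (\<Sum>k<2*Suc l. F k)" by simp
  finally show ?case .
qed



definition f1 :: "nat \<Rightarrow> nat \<Rightarrow> lp" where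
  "f1 l k = (if even k then Zf l (k div 2 + 1) else Wf l (k div 2 + 1))"
definition a1 :: "nat \<Rightarrow> complex" where
  "a1 k = (if even k then alphaZ (k div 2 + 1) else 4)"
definition g3 :: "nat \<Rightarrow> lp" where
  "g3 k = (if even k then Uk k else Rf (k div 2 + 1))"
definition a3 :: "nat \<Rightarrow> complex" where
  "a3 k = (if even k then 1 else -4)"

lemma idx:
  assumes "1 \<le> (j::nat)"
  shows "even (2*j-2)" "(2*j-2) div 2 + 1 = j" "odd (2*j-1)" "(2*j-1) div 2 + 1 = j"
    "Suc ((2*j-2) div 2) = j" "Suc ((2*j - Suc 0) div 2) = j"
proof -
  obtain i where i: "j = Suc i" using assms by (cases j) auto
  show "even (2*j-2)" "(2*j-2) div 2 + 1 = j" "odd (2*j-1)" "(2*j-1) div 2 + 1 = j"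
    "Suc ((2*j-2) div 2) = j" "Suc ((2*j - Suc 0) div 2) = j"
    unfolding i by simp_all
qed

lemma idx_k:
  assumes "(k::nat) < 2*l"
  shows "1 \<le> k div 2 + 1" "k div 2 + 1 \<le> l" "even k \<Longrightarrow> 2*(k div 2 + 1) - 2 = k"
    "odd k \<Longrightarrow> 2*(k div 2 + 1) - 1 = k"
  using assms by auto

lemma fk1:
  assumes "1 \<le> l"
  shows "\<forall>k<2*l. MI k (f1 l k) \<and> MI (Suc k) (\<lambda>z. f1 l k z - a1 k * Uk k z) \<and> a1 k \<noteq> 0"
proof (intro allI impI)
  fix k assume k: "k < 2*l"
  show "MI k (f1 l k) \<and> MI (Suc k) (\<lambda>z. f1 l k z - a1 k * Uk k z) \<and> a1 k \<noteq> 0"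
  proof (cases "even k")
    case True
    have "MI (2*(k div 2 + 1)-2) (Zf l (k div 2 + 1)) \<and>
      MI (Suc (2*(k div 2 + 1)-2)) (\<lambda>z. Zf l (k div 2 + 1) z - alphaZ (k div 2 + 1) * Uk (2*(k div 2 + 1)-2) z)"
      using Zf_order[OF idx_k(1,2)[OF k]] .
    moreover have "alphaZ (k div 2 + 1) \<noteq> 0" by (rule alphaZ_nz) simp
    ultimately show ?thesis unfolding idx_k(3)[OF k True] using True by (simp add: f1_def a1_def)
  next
    case False
    have "MI (2*(k div 2 + 1)-1) (Wf l (k div 2 + 1)) \<and>
      MI (Suc (2*(k div 2 + 1)-1)) (\<lambda>z. Wf l (k div 2 + 1) z - 4 * Uk (2*(k div 2 + 1)-1) z)"
      using Wf_order[OF idx_k(1,2)[OF k]] .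
    then show ?thesis unfolding idx_k(4)[OF k False] using False by (simp add: f1_def a1_def)
  qed
qed

lemma fk3:
  assumes "1 \<le> l"
  shows "\<forall>k<2*l. MI k (g3 k) \<and> MI (Suc k) (\<lambda>z. g3 k z - a3 k * Uk k z) \<and> a3 k \<noteq> 0"
proof (intro allI impI)
  fix k assume k: "k < 2*l"
  show "MI k (g3 k) \<and> MI (Suc k) (\<lambda>z. g3 k z - a3 k * Uk k z) \<and> a3 k \<noteq> 0"
  proof (cases "even k")
    case True
    then show ?thesis by (simp add: g3_def a3_def MI_Uk MI_zero)
  next
    case False
    have "MI (2*(k div 2 + 1)-1) (Rf (k div 2 + 1)) \<and>
      MI (Suc (2*(k div 2 + 1)-1)) (\<lambda>z. Rf (k div 2 + 1) z - (-4) * Uk (2*(k div 2 + 1)-1) z)"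
      using Rf_order[OF idx_k(1)[OF k]] .
    then show ?thesis unfolding idx_k(4)[OF k False] using False by (simp add: g3_def a3_def)
  qed
qed

lemma reind1:
  "(\<Sum>j\<in>{1..l}. a j * Zf l j z + b j * Wf l j z)
   = (\<Sum>k<2*l. (if even k then a (k div 2 + 1) else b (k div 2 + 1)) * f1 l k z)"
proof -
  let ?c = "\<lambda>k. if even k then a (k div 2 + 1) else b (k div 2 + 1)"
  have "(\<Sum>j\<in>{1..l}. a j * Zf l j z + b j * Wf l j z)
      = (\<Sum>j\<in>{1..l}. ?c (2*j-2) * f1 l (2*j-2) z + ?c (2*j-1) * f1 l (2*j-1) z)"
    by (rule sum.cong) (auto simp: f1_def idx)
  also have "\<dots> = (\<Sum>k<2*l. ?c k * f1 l k z)" by (rule reindex)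
  finally show ?thesis .
qed

lemma reind3:
  "(\<Sum>j\<in>{1..l}. g j * Rf j z)
   = (\<Sum>k<2*l. (if even k then 0 else g (k div 2 + 1)) * g3 k z)"
proof -
  let ?c = "\<lambda>k. if even k then 0 else g (k div 2 + 1)"
  have "(\<Sum>j\<in>{1..l}. g j * Rf j z)
      = (\<Sum>j\<in>{1..l}. ?c (2*j-2) * g3 (2*j-2) z + ?c (2*j-1) * g3 (2*j-1) z)"
    by (rule sum.cong) (auto simp: g3_def idx)
  also have "\<dots> = (\<Sum>k<2*l. ?c k * g3 k z)" by (rule reindex)
  finally show ?thesis .
qed

lemma I1:
  assumes l: "1 \<le> l" and M: "MI (2*l) (\<lambda>z. \<Sum>j\<in>{1..l}. a j * Zf l j z + b j * Wf l j z)"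
  shows "\<forall>j\<in>{1..l}. a j = 0 \<and> b j = 0"
proof
  fix j assume j: "j \<in> {1..l}"
  let ?c = "\<lambda>k. if even k then a (k div 2 + 1) else b (k div 2 + 1)"
  have "MI (2*l) (\<lambda>z. \<Sum>k<2*l. ?c k * f1 l k z)" using M by (simp only: reind1)
  from indep_gen[OF fk1[OF l] this] have c: "\<forall>k<2*l. ?c k = 0" .
  have j1: "1 \<le> j" using j by simp
  have lt: "2*j-2 < 2*l" "2*j-1 < 2*l" using j by auto
  have "?c (2*j-2) = a j" unfolding if_P[OF idx(1)[OF j1]] idx(2)[OF j1] ..
  moreover have "?c (2*j-1) = b j" unfolding if_not_P[OF idx(3)[OF j1]] idx(4)[OF j1] ..
  ultimately show "a j = 0 \<and> b j = 0" using c lt by metis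
qed

lemma I3:
  assumes l: "1 \<le> l" and M: "MI (2*l) (\<lambda>z. \<Sum>j\<in>{1..l}. g j * Rf j z)"
  shows "\<forall>j\<in>{1..l}. g j = 0"
proof
  fix j assume j: "j \<in> {1..l}"
  let ?c = "\<lambda>k. if even k then 0 else g (k div 2 + 1)"
  have "MI (2*l) (\<lambda>z. \<Sum>k<2*l. ?c k * g3 k z)" using M by (simp only: reind3)
  from indep_gen[OF fk3[OF l] this] have c: "\<forall>k<2*l. ?c k = 0" .
  have j1: "1 \<le> j" using j by simp
  have lt: "2*j-1 < 2*l" using j by auto
  have "?c (2*j-1) = g j" unfolding if_not_P[OF idx(3)[OF j1]] idx(4)[OF j1] ..
  then show "g j = 0" using c lt by metis
qed

lemma laurent_f1: "laurent (f1 l k)"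
  by (simp add: f1_def laurent_Zf laurent_Wf)

lemma S1:
  assumes l: "1 \<le> l" and p: "laurent p"
  shows "\<exists>(a::nat\<Rightarrow>complex) (b::nat\<Rightarrow>complex). MI (2*l) (\<lambda>z. p z - (\<Sum>j\<in>{1..l}. a j * Zf l j z + b j * Wf l j z))"
proof -
  have fk: "\<forall>k<2*l. k \<in> UNIV \<longrightarrow> (MI k (f1 l k) \<and> MI (Suc k) (\<lambda>z. f1 l k z - a1 k * Uk k z) \<and> a1 k \<noteq> 0)"
    using fk1[OF l] by simp
  have noK: "MI (Suc n) G" if "laurent G" "MI n G" "n < 2*l" "n \<notin> UNIV" for G n
    using that by simp
  have Qs: "laurent (\<lambda>z. G z - c * f1 l k z)" if "laurent G" "k \<in> UNIV" "k < 2*l" for G and c :: complex and k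
    using that by (intro laurent_diff laurent_scale laurent_f1)
  have QL: "laurent G" if "laurent G" for G using that .
  have ex: "\<exists>c::nat\<Rightarrow>complex. MI (2*l) (\<lambda>z. p z - (\<Sum>k<2*l. c k * f1 l k z))"
  proof -
    have "\<exists>c. (\<forall>k. k \<notin> UNIV \<longrightarrow> c k = 0) \<and> MI (2*l) (\<lambda>z. p z - (\<Sum>k<2*l. c k * f1 l k z))"
      by (rule span_gen[where N="2*l" and K=UNIV and f="f1 l" and \<alpha>=a1 and Q=laurent and F=p])
        (fact fk, fact noK, fact Qs, fact QL, fact p)
    then show ?thesis by blast
  qed
  from ex obtain c where c: "MI (2*l) (\<lambda>z. p z - (\<Sum>k<2*l. c k * f1 l k z))" ..
  let ?a = "\<lambda>j. c (2*j-2)" and ?b = "\<lambda>j. c (2*j-1)"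
  have "(\<Sum>j\<in>{1..l}. ?a j * Zf l j z + ?b j * Wf l j z) = (\<Sum>k<2*l. c k * f1 l k z)" for z
  proof -
    have "(\<Sum>j\<in>{1..l}. ?a j * Zf l j z + ?b j * Wf l j z)
       = (\<Sum>k<2*l. (if even k then ?a (k div 2 + 1) else ?b (k div 2 + 1)) * f1 l k z)"
      by (rule reind1)
    also have "\<dots> = (\<Sum>k<2*l. c k * f1 l k z)"
      by (rule sum.cong) auto
    finally show ?thesis .
  qed
  then show ?thesis using c by (intro exI[of _ ?a] exI[of _ ?b]) simp
qed

lemma antis_diff: "antis f \<Longrightarrow> antis g \<Longrightarrow> antis (\<lambda>z. f z - g z)"
  by (simp add: antis_def)
lemma antis_add: "antis f \<Longrightarrow> antis g \<Longrightarrow> antis (\<lambda>z. f z + g z)"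
  by (simp add: antis_def)
lemma antis_scale: "antis f \<Longrightarrow> antis (\<lambda>z. c * f z)"
  by (simp add: antis_def)
lemma antis_sum: "(\<And>a. a \<in> A \<Longrightarrow> antis (f a)) \<Longrightarrow> antis (\<lambda>z. \<Sum>a\<in>A. f a z)"
  by (simp add: antis_def sum_negf)

lemma S3:
  assumes l: "1 \<le> l" and r: "laurent r" "antis r"
  shows "\<exists>(g::nat\<Rightarrow>complex). MI (2*l) (\<lambda>z. r z - (\<Sum>j\<in>{1..l}. g j * Rf j z))"
proof -
  have fk: "\<forall>k<2*l. k \<in> {k. odd k} \<longrightarrow> (MI k (g3 k) \<and> MI (Suc k) (\<lambda>z. g3 k z - a3 k * Uk k z) \<and> a3 k \<noteq> 0)"
    using fk3[OF l] by simp
  have noK: "MI (Suc n) G" if "laurent G \<and> antis G" "MI n G" "n < 2*l" "n \<notin> {k. odd k}" for G n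
    using antis_even[of G n] that by auto
  have Qsub: "laurent (\<lambda>z. G z - c * g3 k z) \<and> antis (\<lambda>z. G z - c * g3 k z)"
    if "laurent G \<and> antis G" "k \<in> {k. odd k}" "k < 2*l" for G and c :: complex and k
  proof -
    have "g3 k = Rf (k div 2 + 1)" using that by (simp add: g3_def)
    moreover have "laurent (Rf (k div 2 + 1))" "antis (Rf (k div 2 + 1))"
      using laurent_Rf antis_Rf[of "k div 2 + 1"] by auto
    ultimately show ?thesis using that by (auto intro: laurent_diff laurent_scale antis_diff antis_scale)
  qed
  have QL: "laurent G" if "laurent G \<and> antis G" for G using that by simp
  have QF: "laurent r \<and> antis r" using r by simp
  have "\<exists>c. (\<forall>k. k \<notin> {k. odd k} \<longrightarrow> c k = 0) \<and> MI (2*l) (\<lambda>z. r z - (\<Sum>k<2*l. c k * g3 k z))"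
    by (rule span_gen[where N="2*l" and K="{k. odd k}" and f=g3 and \<alpha>=a3 and Q="\<lambda>G. laurent G \<and> antis G" and F=r])
      (fact fk, fact noK, fact Qsub, fact QL, fact QF)
  then obtain c where c0: "\<forall>k. k \<notin> {k. odd k} \<longrightarrow> c k = 0" and c: "MI (2*l) (\<lambda>z. r z - (\<Sum>k<2*l. c k * g3 k z))"
    by (elim exE conjE)
  let ?g = "\<lambda>j. c (2*j-1)"
  have "(\<Sum>j\<in>{1..l}. ?g j * Rf j z) = (\<Sum>k<2*l. c k * g3 k z)" for z
  proof -
    have "(\<Sum>j\<in>{1..l}. ?g j * Rf j z) = (\<Sum>k<2*l. (if even k then 0 else ?g (k div 2 + 1)) * g3 k z)"
      by (rule reind3)
    also have "\<dots> = (\<Sum>k<2*l. c k * g3 k z)"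
      using c0 by (intro sum.cong) auto
    finally show ?thesis .
  qed
  then show ?thesis using c by (intro exI[of _ ?g]) simp
qed



lemma E_first:
  fixes p r :: lp and a b g :: "nat \<Rightarrow> complex" and \<mu> :: complex
  assumes l: "1 \<le> l"
  and dp: "MI (2*l) (\<lambda>z. p z - (\<Sum>j\<in>{1..l}. a j * Zf l j z + b j * Wf l j z))"
  and dr: "MI (2*l) (\<lambda>z. r z - (\<Sum>j\<in>{1..l}. g j * Rf j z))"
  and e1: "MI (2*l) (\<lambda>z. -4 * r z - \<mu> * p z)"
  shows "\<forall>j\<in>{1..l}. - \<mu> * a j = 0 \<and> 4 * g j - \<mu> * b j = 0"
proof -
  let ?N = "2*l"
  have ep: "eqv ?N p (\<lambda>z. \<Sum>j\<in>{1..l}. a j * Zf l j z + b j * Wf l j z)" using dp by (simp add: eqv_def)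
  have er: "eqv ?N r (\<lambda>z. \<Sum>j\<in>{1..l}. g j * Rf j z)" using dr by (simp add: eqv_def)
  have A: "eqv ?N (\<lambda>z. -4 * r z - \<mu> * p z)
      (\<lambda>z. -4 * (\<Sum>j\<in>{1..l}. g j * Rf j z) - \<mu> * (\<Sum>j\<in>{1..l}. a j * Zf l j z + b j * Wf l j z))"
    by (rule eqv_diff[OF eqv_scale[OF er] eqv_scale[OF ep]])
  have B: "eqv ?N (\<lambda>z. \<Sum>j\<in>{1..l}. (- \<mu> * a j) * Zf l j z + (- \<mu> * b j) * Wf l j z + (-4 * g j) * Rf j z)
      (\<lambda>z. \<Sum>j\<in>{1..l}. (- \<mu> * a j) * Zf l j z + (4 * g j - \<mu> * b j) * Wf l j z)"
  proof (rule eqv_sum)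
    fix j assume j: "j \<in> {1..l}"
    have "MI ?N (\<lambda>z. (-4 * g j) * (Wf l j z - (- Rf j z)))"
      using W_R[OF l, of j] j by (intro MI_scale) (simp add: eqv_def)
    then show "eqv ?N (\<lambda>z. (- \<mu> * a j) * Zf l j z + (- \<mu> * b j) * Wf l j z + (-4 * g j) * Rf j z)
      (\<lambda>z. (- \<mu> * a j) * Zf l j z + (4 * g j - \<mu> * b j) * Wf l j z)"
      unfolding eqv_def by (rule MI_eq) (simp add: algebra_simps)
  qed
  have C: "(\<Sum>j\<in>{1..l}. (- \<mu> * a j) * Zf l j z + (- \<mu> * b j) * Wf l j z + (-4 * g j) * Rf j z)
     = -4 * (\<Sum>j\<in>{1..l}. g j * Rf j z) - \<mu> * (\<Sum>j\<in>{1..l}. a j * Zf l j z + b j * Wf l j z)" for z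
  proof -
    have "-4 * (\<Sum>j\<in>{1..l}. g j * Rf j z) - \<mu> * (\<Sum>j\<in>{1..l}. a j * Zf l j z + b j * Wf l j z)
      = (\<Sum>j\<in>{1..l}. -4 * (g j * Rf j z) - \<mu> * (a j * Zf l j z + b j * Wf l j z))"
      by (simp only: sum_distrib_left sum_subtractf)
    also have "\<dots> = (\<Sum>j\<in>{1..l}. (- \<mu> * a j) * Zf l j z + (- \<mu> * b j) * Wf l j z + (-4 * g j) * Rf j z)"
      by (rule sum.cong) (simp_all add: algebra_simps)
    finally show ?thesis by (rule sym)
  qed
  have "eqv ?N (\<lambda>z. -4 * r z - \<mu> * p z) (\<lambda>z. \<Sum>j\<in>{1..l}. (- \<mu> * a j) * Zf l j z + (4 * g j - \<mu> * b j) * Wf l j z)"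
    using eqv_trans[OF A eqv_eq[OF B C]] by simp
  from eqv_MI[OF eqv_sym[OF this] e1]
  have "MI ?N (\<lambda>z. \<Sum>j\<in>{1..l}. (- \<mu> * a j) * Zf l j z + (4 * g j - \<mu> * b j) * Wf l j z)" .
  from I1[OF l this] show ?thesis .
qed

lemma E_third:
  fixes p r :: lp and a b g :: "nat \<Rightarrow> complex" and \<mu> :: complex
  assumes l: "1 \<le> l"
  and dp: "MI (2*l) (\<lambda>z. p z - (\<Sum>j\<in>{1..l}. a j * Zf l j z + b j * Wf l j z))"
  and dr: "MI (2*l) (\<lambda>z. r z - (\<Sum>j\<in>{1..l}. g j * Rf j z))"
  and e3: "MI (2*l) (\<lambda>z. 2 * (inv_arg p z - p z) - \<mu> * r z)"
  shows "\<forall>j\<in>{1..l}. 4 * b j - \<mu> * g j = 0"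
proof -
  let ?N = "2*l"
  let ?P = "\<lambda>z. \<Sum>j\<in>{1..l}. a j * Zf l j z + b j * Wf l j z"
  have ep: "eqv ?N p ?P" using dp by (simp add: eqv_def)
  have er: "eqv ?N r (\<lambda>z. \<Sum>j\<in>{1..l}. g j * Rf j z)" using dr by (simp add: eqv_def)
  have ip: "inv_arg ?P = (\<lambda>z. \<Sum>j\<in>{1..l}. a j * inv_arg (Zf l j) z + b j * inv_arg (Wf l j) z)"
    by (simp add: inv_arg_def)
  have A: "eqv ?N (\<lambda>z. 2 * (inv_arg p z - p z) - \<mu> * r z)
      (\<lambda>z. 2 * (inv_arg ?P z - ?P z) - \<mu> * (\<Sum>j\<in>{1..l}. g j * Rf j z))"
    by (rule eqv_diff[OF eqv_scale[OF eqv_diff[OF eqv_inv[OF ep] ep]] eqv_scale[OF er]])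
  have B: "eqv ?N (\<lambda>z. \<Sum>j\<in>{1..l}. (2 * a j) * (inv_arg (Zf l j) z - Zf l j z)
                 + (2 * b j) * (inv_arg (Wf l j) z - Wf l j z) - (\<mu> * g j) * Rf j z)
      (\<lambda>z. \<Sum>j\<in>{1..l}. (4 * b j - \<mu> * g j) * Rf j z)"
  proof (rule eqv_sum)
    fix j assume j: "j \<in> {1..l}"
    have z: "MI ?N (\<lambda>z. inv_arg (Zf l j) z - Zf l j z)" using Z_sym[OF l, of j] j by (simp add: eqv_def)
    have w: "MI ?N (\<lambda>z. (inv_arg (Wf l j) z - Wf l j z) - 2 * Rf j z)" using W_R2[OF l, of j] j by (simp add: eqv_def)
    have "MI ?N (\<lambda>z. (2 * a j) * (inv_arg (Zf l j) z - Zf l j z) + (2 * b j) * ((inv_arg (Wf l j) z - Wf l j z) - 2 * Rf j z))"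
      by (intro MI_add MI_scale z w)
    then show "eqv ?N (\<lambda>z. (2 * a j) * (inv_arg (Zf l j) z - Zf l j z)
                 + (2 * b j) * (inv_arg (Wf l j) z - Wf l j z) - (\<mu> * g j) * Rf j z)
      (\<lambda>z. (4 * b j - \<mu> * g j) * Rf j z)"
      unfolding eqv_def by (rule MI_eq) (simp add: algebra_simps)
  qed
  have C: "(\<Sum>j\<in>{1..l}. (2 * a j) * (inv_arg (Zf l j) z - Zf l j z)
                 + (2 * b j) * (inv_arg (Wf l j) z - Wf l j z) - (\<mu> * g j) * Rf j z)
     = 2 * (inv_arg ?P z - ?P z) - \<mu> * (\<Sum>j\<in>{1..l}. g j * Rf j z)" for z
  proof -
    have "2 * (inv_arg ?P z - ?P z) - \<mu> * (\<Sum>j\<in>{1..l}. g j * Rf j z)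
      = (\<Sum>j\<in>{1..l}. 2 * ((a j * inv_arg (Zf l j) z + b j * inv_arg (Wf l j) z) - (a j * Zf l j z + b j * Wf l j z)) - \<mu> * (g j * Rf j z))"
      unfolding ip by (simp only: sum_distrib_left sum_subtractf[symmetric])
    also have "\<dots> = (\<Sum>j\<in>{1..l}. (2 * a j) * (inv_arg (Zf l j) z - Zf l j z)
                 + (2 * b j) * (inv_arg (Wf l j) z - Wf l j z) - (\<mu> * g j) * Rf j z)"
      by (rule sum.cong) (simp_all add: algebra_simps)
    finally show ?thesis by (rule sym)
  qed
  have "eqv ?N (\<lambda>z. 2 * (inv_arg p z - p z) - \<mu> * r z) (\<lambda>z. \<Sum>j\<in>{1..l}. (4 * b j - \<mu> * g j) * Rf j z)"
    using eqv_trans[OF A eqv_eq[OF B C]] by simp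
  from eqv_MI[OF eqv_sym[OF this] e3]
  have "MI ?N (\<lambda>z. \<Sum>j\<in>{1..l}. (4 * b j - \<mu> * g j) * Rf j z)" .
  from I3[OF l this] show ?thesis .
qed

lemma trip_cong: "(\<And>z. p z = p' z) \<Longrightarrow> (\<And>z. r z = r' z) \<Longrightarrow> trip p r = trip p' r'"
proof -
  assume "\<And>z. p z = p' z" "\<And>z. r z = r' z"
  then have "p = p'" "r = r'" by auto
  then show ?thesis by simp
qed

lemma combo_eq:
  fixes a b c :: "nat \<Rightarrow> complex"
  shows "(\<Sum>j=1..l. elt_scale (a j) (zero_vec l j) + elt_scale (b j) (pm_vec l 1 j)
                    + elt_scale (c j) (pm_vec l (-1) j))
    = trip (\<lambda>z. \<Sum>j\<in>{1..l}. a j * Zf l j z + (b j - c j) * Wf l j z) (\<lambda>z. \<Sum>j\<in>{1..l}. (b j + c j) * Rf j z)"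
proof -
  have "(\<Sum>j=1..l. elt_scale (a j) (zero_vec l j) + elt_scale (b j) (pm_vec l 1 j)
                    + elt_scale (c j) (pm_vec l (-1) j))
     = (\<Sum>j=1..l. trip (\<lambda>z. a j * Zf l j z + (b j - c j) * Wf l j z) (\<lambda>z. (b j + c j) * Rf j z))"
  proof (rule sum.cong)
    fix j assume "j \<in> {1..l}"
    then have j: "1 \<le> j" by simp
    show "elt_scale (a j) (zero_vec l j) + elt_scale (b j) (pm_vec l 1 j) + elt_scale (c j) (pm_vec l (-1) j)
      = trip (\<lambda>z. a j * Zf l j z + (b j - c j) * Wf l j z) (\<lambda>z. (b j + c j) * Rf j z)"
      unfolding zero_vec_eq[OF j] pm_vec_eq trip_scale trip_add
      by (rule trip_cong) (simp_all add: algebra_simps)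
  qed simp
  then show ?thesis by (simp only: trip_sum)
qed

lemma zcombo_eq:
  fixes a :: "nat \<Rightarrow> complex"
  shows "(\<Sum>j=1..l. elt_scale (a j) (zero_vec l j)) = trip (\<lambda>z. \<Sum>j\<in>{1..l}. a j * Zf l j z) (\<lambda>z. 0)"
proof -
  have "(\<Sum>j=1..l. elt_scale (a j) (zero_vec l j)) = (\<Sum>j=1..l. trip (\<lambda>z. a j * Zf l j z) (\<lambda>z. 0))"
  proof (rule sum.cong)
    fix j assume "j \<in> {1..l}"
    then have j: "1 \<le> j" by simp
    show "elt_scale (a j) (zero_vec l j) = trip (\<lambda>z. a j * Zf l j z) (\<lambda>z. 0)"
      unfolding zero_vec_eq[OF j] trip_scale by (rule trip_cong) simp_all
  qed simp
  then show ?thesis by (simp add: trip_sum)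
qed

lemma pcombo_eq:
  fixes a :: "nat \<Rightarrow> complex" and s :: complex
  shows "(\<Sum>j=1..l. elt_scale (a j) (pm_vec l s j)) = trip (\<lambda>z. \<Sum>j\<in>{1..l}. (a j * s) * Wf l j z) (\<lambda>z. \<Sum>j\<in>{1..l}. a j * Rf j z)"
proof -
  have "(\<Sum>j=1..l. elt_scale (a j) (pm_vec l s j)) = (\<Sum>j=1..l. trip (\<lambda>z. (a j * s) * Wf l j z) (\<lambda>z. a j * Rf j z))"
    by (rule sum.cong) (simp_all add: pm_vec_eq trip_scale mult.assoc)
  then show ?thesis by (simp only: trip_sum)
qed

lemma antis_invdiff: "antis (\<lambda>z. c * (inv_arg P z - P z))"
  by (simp add: antis_def inv_arg_def algebra_simps)

lemma C1:
  assumes l: "1 \<le> l"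
  shows "\<forall>j\<in>{1..l}. zero_vec l j \<in> Onsager \<and>
        loop_bracket (Xel 0) (zero_vec l j) \<in> onsager_ideal (2*l)"
proof
  fix j assume jj: "j \<in> {1..l}"
  then have j: "1 \<le> j" "j \<le> l" by auto
  have "zero_vec l j \<in> Onsager"
    unfolding zero_vec_eq[OF j(1)] trip_Onsager by (simp add: laurent_Zf laurent_zero antis_zero)
  moreover have "loop_bracket (Xel 0) (zero_vec l j) \<in> onsager_ideal (2*l)"
  proof -
    have b: "loop_bracket (Xel 0) (zero_vec l j) = trip (\<lambda>z. -4 * 0) (\<lambda>z. 2 * (inv_arg (Zf l j) z - Zf l j z))"
      unfolding zero_vec_eq[OF j(1)] by (rule bracket_X0[OF laurent_Zf laurent_zero antis_zero])
    have m1: "MI (2*l) (\<lambda>z. -4 * (0::complex))" using MI_zero by simp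
    have m2: "MI (2*l) (\<lambda>z. 2 * (inv_arg (Zf l j) z - Zf l j z))"
      using Z_sym[OF l j] unfolding eqv_def by (rule MI_scale)
    show ?thesis unfolding b by (rule trip_idealI[OF m1 m2 antis_invdiff])
  qed
  ultimately show "zero_vec l j \<in> Onsager \<and> loop_bracket (Xel 0) (zero_vec l j) \<in> onsager_ideal (2*l)" ..
qed

lemma C2:
  assumes l: "1 \<le> l"
  shows "\<forall>j\<in>{1..l}. \<forall>s\<in>{1, -1}. pm_vec l s j \<in> Onsager \<and>
        loop_bracket (Xel 0) (pm_vec l s j) - elt_scale (4 * s) (pm_vec l s j) \<in> onsager_ideal (2*l)"
proof (intro ballI)
  fix j and s :: complex assume jj: "j \<in> {1..l}" and ss: "s \<in> {1, -1}"
  then have j: "1 \<le> j" "j \<le> l" by auto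
  have s2: "s * s = 1" using ss by auto
  have lW: "laurent (\<lambda>z. s * Wf l j z)" by (intro laurent_scale laurent_Wf)
  have "pm_vec l s j \<in> Onsager"
    unfolding pm_vec_eq trip_Onsager using lW laurent_Rf antis_Rf[OF j(1)] by simp
  moreover have "loop_bracket (Xel 0) (pm_vec l s j) - elt_scale (4 * s) (pm_vec l s j) \<in> onsager_ideal (2*l)"
  proof -
    have b: "loop_bracket (Xel 0) (pm_vec l s j) - elt_scale (4 * s) (pm_vec l s j)
      = trip (\<lambda>z. -4 * Rf j z - 4 * s * (s * Wf l j z))
             (\<lambda>z. 2 * (inv_arg (\<lambda>z. s * Wf l j z) z - s * Wf l j z) - 4 * s * Rf j z)"
      unfolding pm_vec_eq bracket_X0[OF lW laurent_Rf antis_Rf[OF j(1)]] trip_scale trip_diff ..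
    have m1: "MI (2*l) (\<lambda>z. -4 * Rf j z - 4 * s * (s * Wf l j z))"
    proof -
      have "MI (2*l) (\<lambda>z. -4 * (Wf l j z - (- Rf j z)))"
        using W_R[OF l j(1)] unfolding eqv_def by (rule MI_scale)
      then show ?thesis
      proof (rule MI_eq)
        fix z
        have "4 * s * (s * Wf l j z) = 4 * (s * s) * Wf l j z" by (simp add: mult_ac)
        then show "-4 * (Wf l j z - (- Rf j z)) = -4 * Rf j z - 4 * s * (s * Wf l j z)"
          by (simp add: s2 algebra_simps)
      qed
    qed
    have m2: "MI (2*l) (\<lambda>z. 2 * (inv_arg (\<lambda>z. s * Wf l j z) z - s * Wf l j z) - 4 * s * Rf j z)"
    proof -
      have "MI (2*l) (\<lambda>z. (2 * s) * ((inv_arg (Wf l j) z - Wf l j z) - 2 * Rf j z))"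
        using W_R2[OF l j(1)] unfolding eqv_def by (rule MI_scale)
      then show ?thesis by (rule MI_eq) (simp add: inv_arg_def algebra_simps)
    qed
    have a: "antis (\<lambda>z. 2 * (inv_arg (\<lambda>z. s * Wf l j z) z - s * Wf l j z) - 4 * s * Rf j z)"
      by (rule antis_diff[OF antis_invdiff antis_scale[OF antis_Rf[OF j(1)]]])
    show ?thesis unfolding b by (rule trip_idealI[OF m1 m2 a])
  qed
  ultimately show "pm_vec l s j \<in> Onsager \<and>
        loop_bracket (Xel 0) (pm_vec l s j) - elt_scale (4 * s) (pm_vec l s j) \<in> onsager_ideal (2*l)" ..
qed

lemma C3:
  assumes l: "1 \<le> l"
  shows "\<forall>a b c :: nat \<Rightarrow> complex.
        (\<Sum>j=1..l. elt_scale (a j) (zero_vec l j) + elt_scale (b j) (pm_vec l 1 j)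
                    + elt_scale (c j) (pm_vec l (-1) j)) \<in> onsager_ideal (2*l)
        \<longrightarrow> (\<forall>j\<in>{1..l}. a j = 0 \<and> b j = 0 \<and> c j = 0)"
proof (intro allI impI)
  fix a b c :: "nat \<Rightarrow> complex"
  assume "(\<Sum>j=1..l. elt_scale (a j) (zero_vec l j) + elt_scale (b j) (pm_vec l 1 j)
                    + elt_scale (c j) (pm_vec l (-1) j)) \<in> onsager_ideal (2*l)"
  then have m: "MI (2*l) (\<lambda>z. \<Sum>j\<in>{1..l}. a j * Zf l j z + (b j - c j) * Wf l j z)"
     "MI (2*l) (\<lambda>z. \<Sum>j\<in>{1..l}. (b j + c j) * Rf j z)"
    unfolding combo_eq trip_ideal by auto
  have i1: "\<forall>j\<in>{1..l}. a j = 0 \<and> b j - c j = 0" by (rule I1[OF l m(1)])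
  have i3: "\<forall>j\<in>{1..l}. b j + c j = 0" by (rule I3[OF l m(2)])
  show "\<forall>j\<in>{1..l}. a j = 0 \<and> b j = 0 \<and> c j = 0"
  proof
    fix j assume "j \<in> {1..l}"
    then have "a j = 0" "b j - c j = 0" "b j + c j = 0" using i1 i3 by auto
    then show "a j = 0 \<and> b j = 0 \<and> c j = 0" by (simp add: algebra_simps)
  qed
qed

lemma bracket_mu:
  "laurent p \<Longrightarrow> laurent r \<Longrightarrow> antis r \<Longrightarrow>
   loop_bracket (Xel 0) (trip p r) - elt_scale \<mu> (trip p r)
   = trip (\<lambda>z. -4 * r z - \<mu> * p z) (\<lambda>z. 2 * (inv_arg p z - p z) - \<mu> * r z)"
  by (simp only: bracket_X0 trip_scale trip_diff)

lemma decomp: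
  assumes l: "1 \<le> l" and x: "x \<in> Onsager"
  obtains p r and a b g :: "nat \<Rightarrow> complex" where "x = trip p r" "laurent p" "laurent r" "antis r"
    "MI (2*l) (\<lambda>z. p z - (\<Sum>j\<in>{1..l}. a j * Zf l j z + b j * Wf l j z))"
    "MI (2*l) (\<lambda>z. r z - (\<Sum>j\<in>{1..l}. g j * Rf j z))"
proof -
  obtain p r where pr: "x = trip p r" "laurent p" "laurent r" "antis r" using Onsager_trip[OF x] by blast
  from S1[OF l pr(2)] obtain a b :: "nat \<Rightarrow> complex"
    where dp: "MI (2*l) (\<lambda>z. p z - (\<Sum>j\<in>{1..l}. a j * Zf l j z + b j * Wf l j z))" by (elim exE)
  from S3[OF l pr(3,4)] obtain g :: "nat \<Rightarrow> complex"
    where dr: "MI (2*l) (\<lambda>z. r z - (\<Sum>j\<in>{1..l}. g j * Rf j z))" by (elim exE)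
  show ?thesis by (rule that[OF pr dp dr])
qed

lemma C4:
  assumes l: "1 \<le> l"
  shows "\<forall>x\<in>Onsager. \<exists>a b c :: nat \<Rightarrow> complex.
        x - (\<Sum>j=1..l. elt_scale (a j) (zero_vec l j) + elt_scale (b j) (pm_vec l 1 j)
                    + elt_scale (c j) (pm_vec l (-1) j)) \<in> onsager_ideal (2*l)"
proof
  fix x assume x: "x \<in> Onsager"
  obtain p r and a bb g :: "nat \<Rightarrow> complex" where pr: "x = trip p r" "laurent p" "laurent r" "antis r"
    and dp: "MI (2*l) (\<lambda>z. p z - (\<Sum>j\<in>{1..l}. a j * Zf l j z + bb j * Wf l j z))"
    and dr: "MI (2*l) (\<lambda>z. r z - (\<Sum>j\<in>{1..l}. g j * Rf j z))"
    by (rule decomp[OF l x])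
  define b :: "nat \<Rightarrow> complex" where "b = (\<lambda>j. (g j + bb j) / 2)"
  define c :: "nat \<Rightarrow> complex" where "c = (\<lambda>j. (g j - bb j) / 2)"
  have bc: "b j - c j = bb j" "b j + c j = g j" for j by (simp_all add: b_def c_def field_simps)
  have an: "antis (\<lambda>z. r z - (\<Sum>j\<in>{1..l}. g j * Rf j z))"
    by (intro antis_diff pr(4) antis_sum antis_scale antis_Rf) simp
  have "x - (\<Sum>j=1..l. elt_scale (a j) (zero_vec l j) + elt_scale (b j) (pm_vec l 1 j)
                    + elt_scale (c j) (pm_vec l (-1) j)) \<in> onsager_ideal (2*l)"
    unfolding combo_eq bc pr(1) trip_diff by (rule trip_idealI[OF dp dr an])
  then show "\<exists>a b c :: nat \<Rightarrow> complex.
        x - (\<Sum>j=1..l. elt_scale (a j) (zero_vec l j) + elt_scale (b j) (pm_vec l 1 j)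
                    + elt_scale (c j) (pm_vec l (-1) j)) \<in> onsager_ideal (2*l)" by blast
qed

lemma C5:
  assumes l: "1 \<le> l"
  shows "\<forall>\<mu> :: complex. \<forall>x\<in>Onsager. x \<notin> onsager_ideal (2*l) \<and>
        loop_bracket (Xel 0) x - elt_scale \<mu> x \<in> onsager_ideal (2*l) \<longrightarrow> \<mu> \<in> {0, 4, -4}"
proof (intro allI ballI impI)
  fix \<mu> :: complex and x assume x: "x \<in> Onsager"
    and H: "x \<notin> onsager_ideal (2*l) \<and> loop_bracket (Xel 0) x - elt_scale \<mu> x \<in> onsager_ideal (2*l)"
  obtain p r and a b g :: "nat \<Rightarrow> complex" where pr: "x = trip p r" "laurent p" "laurent r" "antis r"
    and dp: "MI (2*l) (\<lambda>z. p z - (\<Sum>j\<in>{1..l}. a j * Zf l j z + b j * Wf l j z))"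
    and dr: "MI (2*l) (\<lambda>z. r z - (\<Sum>j\<in>{1..l}. g j * Rf j z))"
    by (rule decomp[OF l x])
  have e: "MI (2*l) (\<lambda>z. -4 * r z - \<mu> * p z)" "MI (2*l) (\<lambda>z. 2 * (inv_arg p z - p z) - \<mu> * r z)"
    using H unfolding pr(1) bracket_mu[OF pr(2,3,4)] trip_ideal by auto
  have E1: "\<forall>j\<in>{1..l}. - \<mu> * a j = 0 \<and> 4 * g j - \<mu> * b j = 0" by (rule E_first[OF l dp dr e(1)])
  have E3: "\<forall>j\<in>{1..l}. 4 * b j - \<mu> * g j = 0" by (rule E_third[OF l dp dr e(2)])
  show "\<mu> \<in> {0, 4, -4}"
  proof (rule ccontr)
    assume nm: "\<mu> \<notin> {0, 4, -4}"
    then have m0: "\<mu> \<noteq> 0" by auto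
    have m16: "16 - \<mu> * \<mu> \<noteq> 0"
    proof
      assume "16 - \<mu> * \<mu> = 0"
      then have "(4 - \<mu>) * (4 + \<mu>) = 0" by (simp add: algebra_simps)
      then show False using nm by (auto simp: add_eq_0_iff)
    qed
    have z: "a j = 0 \<and> b j = 0 \<and> g j = 0" if "j \<in> {1..l}" for j
    proof -
      have h1: "- \<mu> * a j = 0" "4 * g j - \<mu> * b j = 0" "4 * b j - \<mu> * g j = 0" using E1 E3 that by auto
      have "a j = 0" using h1(1) m0 by simp
      moreover have "(16 - \<mu> * \<mu>) * b j = 0"
      proof -
        have "(16 - \<mu> * \<mu>) * b j = 4 * (4 * b j - \<mu> * g j) + \<mu> * (4 * g j - \<mu> * b j)"
          by (simp add: algebra_simps)
        then show ?thesis using h1 by simp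
      qed
      then have "b j = 0" using m16 by simp
      moreover have "g j = 0" using h1(2) \<open>b j = 0\<close> by simp
      ultimately show ?thesis by simp
    qed
    have s1: "(\<Sum>j\<in>{1..l}. a j * Zf l j z + b j * Wf l j z) = 0" for z
      using z by (intro sum.neutral) auto
    have s2: "(\<Sum>j\<in>{1..l}. g j * Rf j z) = 0" for z
      using z by (intro sum.neutral) auto
    have mp: "MI (2*l) p" using dp unfolding s1 by simp
    have mr: "MI (2*l) r" using dr unfolding s2 by simp
    have "x \<in> onsager_ideal (2*l)"
      unfolding pr(1) by (rule trip_idealI[OF mp mr pr(4)])
    then show False using H by simp
  qed
qed

lemma C6:
  assumes l: "1 \<le> l"
  shows "\<forall>x\<in>Onsager. loop_bracket (Xel 0) x \<in> onsager_ideal (2*l) \<longrightarrow>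
        (\<exists>a :: nat \<Rightarrow> complex. x - (\<Sum>j=1..l. elt_scale (a j) (zero_vec l j)) \<in> onsager_ideal (2*l))"
proof (intro ballI impI)
  fix x assume x: "x \<in> Onsager" and H: "loop_bracket (Xel 0) x \<in> onsager_ideal (2*l)"
  obtain p r and a b g :: "nat \<Rightarrow> complex" where pr: "x = trip p r" "laurent p" "laurent r" "antis r"
    and dp: "MI (2*l) (\<lambda>z. p z - (\<Sum>j\<in>{1..l}. a j * Zf l j z + b j * Wf l j z))"
    and dr: "MI (2*l) (\<lambda>z. r z - (\<Sum>j\<in>{1..l}. g j * Rf j z))"
    by (rule decomp[OF l x])
  have e: "MI (2*l) (\<lambda>z. -4 * r z)" "MI (2*l) (\<lambda>z. 2 * (inv_arg p z - p z))"
    using H unfolding pr(1) bracket_X0[OF pr(2,3,4)] trip_ideal by auto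
  have e1: "MI (2*l) (\<lambda>z. -4 * r z - 0 * p z)" using e(1) by simp
  have e3: "MI (2*l) (\<lambda>z. 2 * (inv_arg p z - p z) - 0 * r z)" using e(2) by simp
  have E1: "\<forall>j\<in>{1..l}. - 0 * a j = 0 \<and> 4 * g j - 0 * b j = 0" by (rule E_first[OF l dp dr e1])
  have E3: "\<forall>j\<in>{1..l}. 4 * b j - 0 * g j = 0" by (rule E_third[OF l dp dr e3])
  have s1: "(\<Sum>j\<in>{1..l}. a j * Zf l j z + b j * Wf l j z) = (\<Sum>j\<in>{1..l}. a j * Zf l j z)" for z
    using E3 by (intro sum.cong) auto
  have s2: "(\<Sum>j\<in>{1..l}. g j * Rf j z) = 0" for z
    using E1 by (intro sum.neutral) auto
  have "x - (\<Sum>j=1..l. elt_scale (a j) (zero_vec l j)) \<in> onsager_ideal (2*l)"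
    unfolding zcombo_eq pr(1) trip_diff
  proof (rule trip_idealI)
    show "MI (2*l) (\<lambda>z. p z - (\<Sum>j\<in>{1..l}. a j * Zf l j z))" using dp unfolding s1 .
    show "MI (2*l) (\<lambda>z. r z - 0)" using dr unfolding s2 .
    show "antis (\<lambda>z. r z - 0)" using pr(4) by simp
  qed
  then show "\<exists>a :: nat \<Rightarrow> complex. x - (\<Sum>j=1..l. elt_scale (a j) (zero_vec l j)) \<in> onsager_ideal (2*l)" by blast
qed

lemma C7:
  assumes l: "1 \<le> l"
  shows "\<forall>s\<in>{1, -1}. \<forall>x\<in>Onsager.
        loop_bracket (Xel 0) x - elt_scale (4 * s) x \<in> onsager_ideal (2*l) \<longrightarrow>
        (\<exists>a :: nat \<Rightarrow> complex. x - (\<Sum>j=1..l. elt_scale (a j) (pm_vec l s j)) \<in> onsager_ideal (2*l))"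
proof (intro ballI impI)
  fix s :: complex and x assume ss: "s \<in> {1, -1}" and x: "x \<in> Onsager"
    and H: "loop_bracket (Xel 0) x - elt_scale (4 * s) x \<in> onsager_ideal (2*l)"
  have s2: "s * s = 1" and s0: "s \<noteq> 0" using ss by auto
  obtain p r and a b g :: "nat \<Rightarrow> complex" where pr: "x = trip p r" "laurent p" "laurent r" "antis r"
    and dp: "MI (2*l) (\<lambda>z. p z - (\<Sum>j\<in>{1..l}. a j * Zf l j z + b j * Wf l j z))"
    and dr: "MI (2*l) (\<lambda>z. r z - (\<Sum>j\<in>{1..l}. g j * Rf j z))"
    by (rule decomp[OF l x])
  have e: "MI (2*l) (\<lambda>z. -4 * r z - (4 * s) * p z)" "MI (2*l) (\<lambda>z. 2 * (inv_arg p z - p z) - (4 * s) * r z)"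
    using H unfolding pr(1) bracket_mu[OF pr(2,3,4)] trip_ideal by auto
  have E1: "\<forall>j\<in>{1..l}. - (4 * s) * a j = 0 \<and> 4 * g j - (4 * s) * b j = 0" by (rule E_first[OF l dp dr e(1)])
  define d :: "nat \<Rightarrow> complex" where "d = (\<lambda>j. s * b j)"
  have h: "a j = 0" "d j * s = b j" "d j = g j" if "j \<in> {1..l}" for j
  proof -
    have h1: "- (4 * s) * a j = 0" "4 * g j - (4 * s) * b j = 0" using E1 that by auto
    show "a j = 0" using h1(1) s0 by simp
    have "s * b j * s = (s * s) * b j" by (simp only: mult_ac)
    then show "d j * s = b j" unfolding d_def by (simp only: s2 mult_1)
    show "d j = g j" using h1(2) unfolding d_def by simp
  qed
  have s1: "(\<Sum>j\<in>{1..l}. a j * Zf l j z + b j * Wf l j z) = (\<Sum>j\<in>{1..l}. (d j * s) * Wf l j z)" for z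
    using h by (intro sum.cong) auto
  have s3: "(\<Sum>j\<in>{1..l}. g j * Rf j z) = (\<Sum>j\<in>{1..l}. d j * Rf j z)" for z
    using h by (intro sum.cong) auto
  have an: "antis (\<lambda>z. r z - (\<Sum>j\<in>{1..l}. d j * Rf j z))"
    by (intro antis_diff pr(4) antis_sum antis_scale antis_Rf) simp
  have "x - (\<Sum>j=1..l. elt_scale (d j) (pm_vec l s j)) \<in> onsager_ideal (2*l)"
    unfolding pcombo_eq pr(1) trip_diff
  proof (rule trip_idealI[OF _ _ an])
    show "MI (2*l) (\<lambda>z. p z - (\<Sum>j\<in>{1..l}. (d j * s) * Wf l j z))" using dp unfolding s1 .
    show "MI (2*l) (\<lambda>z. r z - (\<Sum>j\<in>{1..l}. d j * Rf j z))" using dr unfolding s3 .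
  qed
  then show "\<exists>a :: nat \<Rightarrow> complex. x - (\<Sum>j=1..l. elt_scale (a j) (pm_vec l s j)) \<in> onsager_ideal (2*l)" by blast
qed

lemma antis_comm: "antis (\<lambda>z. P z * inv_arg Q z - inv_arg P z * Q z)"
  by (simp add: antis_def inv_arg_def algebra_simps)

lemma C8:
  assumes l: "1 \<le> l"
  shows "\<forall>i\<in>{1..l}. \<forall>j\<in>{1..l}. loop_bracket (zero_vec l i) (zero_vec l j) \<in> onsager_ideal (2*l)"
proof (intro ballI)
  fix i j assume i: "i \<in> {1..l}" and j: "j \<in> {1..l}"
  have b: "loop_bracket (zero_vec l i) (zero_vec l j)
     = trip (\<lambda>z. 2 * (0 * Zf l j z - Zf l i z * 0)) (\<lambda>z. Zf l i z * inv_arg (Zf l j) z - inv_arg (Zf l i) z * Zf l j z)"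
    using i j by (simp add: zero_vec_eq bracket_trip[OF antis_zero antis_zero])
  have m1: "MI (2*l) (\<lambda>z. 2 * (0 * Zf l j z - Zf l i z * (0::complex)))" using MI_zero by simp
  have zi: "MI (2*l) (\<lambda>z. inv_arg (Zf l i) z - Zf l i z)" using Z_sym[OF l, of i] i by (simp add: eqv_def)
  have zj: "MI (2*l) (\<lambda>z. inv_arg (Zf l j) z - Zf l j z)" using Z_sym[OF l, of j] j by (simp add: eqv_def)
  have "MI (2*l) (\<lambda>z. Zf l i z * (inv_arg (Zf l j) z - Zf l j z) - (inv_arg (Zf l i) z - Zf l i z) * Zf l j z)"
    by (intro MI_diff MI_multl[OF zj laurent_Zf] MI_multr[OF zi laurent_Zf])
  then have m2: "MI (2*l) (\<lambda>z. Zf l i z * inv_arg (Zf l j) z - inv_arg (Zf l i) z * Zf l j z)"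
    by (rule MI_eq) (simp add: algebra_simps)
  show "loop_bracket (zero_vec l i) (zero_vec l j) \<in> onsager_ideal (2*l)"
    unfolding b by (rule trip_idealI[OF m1 m2 antis_comm])
qed

theorem lemma11:
  fixes l :: nat
  assumes "l \<ge> 1"
  shows
    \<comment> \<open>the listed vectors lie in OA and are eigenvectors of ad X_0 modulo the ideal\<close>
    "(\<forall>j\<in>{1..l}. zero_vec l j \<in> Onsager \<and>
        loop_bracket (Xel 0) (zero_vec l j) \<in> onsager_ideal (2*l))
   \<and> (\<forall>j\<in>{1..l}. \<forall>s\<in>{1, -1}. pm_vec l s j \<in> Onsager \<and>
        loop_bracket (Xel 0) (pm_vec l s j) - elt_scale (4 * s) (pm_vec l s j) \<in> onsager_ideal (2*l))
   \<comment> \<open>together they are linearly independent in the quotient\<close>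
   \<and> (\<forall>a b c :: nat \<Rightarrow> complex.
        (\<Sum>j=1..l. elt_scale (a j) (zero_vec l j) + elt_scale (b j) (pm_vec l 1 j)
                    + elt_scale (c j) (pm_vec l (-1) j)) \<in> onsager_ideal (2*l)
        \<longrightarrow> (\<forall>j\<in>{1..l}. a j = 0 \<and> b j = 0 \<and> c j = 0))
   \<comment> \<open>and span the quotient (ad X_0 is diagonalizable)\<close>
   \<and> (\<forall>x\<in>Onsager. \<exists>a b c :: nat \<Rightarrow> complex.
        x - (\<Sum>j=1..l. elt_scale (a j) (zero_vec l j) + elt_scale (b j) (pm_vec l 1 j)
                    + elt_scale (c j) (pm_vec l (-1) j)) \<in> onsager_ideal (2*l))
   \<comment> \<open>the only eigenvalues are 0, 4, -4\<close>
   \<and> (\<forall>\<mu> :: complex. \<forall>x\<in>Onsager. x \<notin> onsager_ideal (2*l) \<and>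
        loop_bracket (Xel 0) x - elt_scale \<mu> x \<in> onsager_ideal (2*l) \<longrightarrow> \<mu> \<in> {0, 4, -4})
   \<comment> \<open>each eigenspace is spanned by its listed vectors\<close>
   \<and> (\<forall>x\<in>Onsager. loop_bracket (Xel 0) x \<in> onsager_ideal (2*l) \<longrightarrow>
        (\<exists>a :: nat \<Rightarrow> complex. x - (\<Sum>j=1..l. elt_scale (a j) (zero_vec l j)) \<in> onsager_ideal (2*l)))
   \<and> (\<forall>s\<in>{1, -1}. \<forall>x\<in>Onsager.
        loop_bracket (Xel 0) x - elt_scale (4 * s) x \<in> onsager_ideal (2*l) \<longrightarrow>
        (\<exists>a :: nat \<Rightarrow> complex. x - (\<Sum>j=1..l. elt_scale (a j) (pm_vec l s j)) \<in> onsager_ideal (2*l)))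
   \<comment> \<open>the 0-eigenvectors commute\<close>
   \<and> (\<forall>i\<in>{1..l}. \<forall>j\<in>{1..l}. loop_bracket (zero_vec l i) (zero_vec l j) \<in> onsager_ideal (2*l))"
  using C1[OF assms] C2[OF assms] C3[OF assms] C4[OF assms] C5[OF assms] C6[OF assms]
    C7[OF assms] C8[OF assms]
  by (intro conjI) assumption+

end
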